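(* There is an absolute constant $C>0$ such that the following holds for every positive integer $n$. Let $N\ge \mathrm{tw}_8(Cn^3)$ and let $\phi:[N]^{(2)}\to\mathbb{R}$. Then there exist $S\subset[N]$ with $|S|=n$ and a function $\sigma:S^{(2)}\to\mathbb{R}$ such that $\sigma\sim\phi$ on $S$ (i.e. $\sigma\sim\phi|_{S^{(2)}}$) and $\sigma$ is exponentially separated.
   Context: $[N]=\{1,\dots,N\}$ with its natural order. For an ordered set $A$, $A^{(k)}=\{(a_1,\dots,a_k)\in A^k:a_1<\dots<a_k\}$. The tower function: $\mathrm{tw}_1(x)=x$, $\mathrm{tw}_k(x)=2^{\mathrm{tw}_{k-1}(x)}$. For functions $\phi,\phi':A^{(2)}\to\mathbb{R}$, write $\phi\sim\phi'$ if there exist $\rho_1,\rho_2:A\to\mathbb{R}$ with $\phi(a,b)=\phi'(a,b)-\rho_1(a)-\rho_2(b)$ for all $(a,b)\in A^{(2)}$. A function $\phi:B\to\mathbb{R}$ on a finite set $B$ is exponentially separated if either $\phi(b)\ge0$ for all $b\in B$ or $\phi(b)\le 0$ for all $b\in B$, and for any two distinct $b,b'\in B$ we have $|\phi(b)|\ge 2|\phi(b')|$ or $|\phi(b')|\ge 2|\phi(b)|$. *)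

theory Defs
  imports Complex_Main
begin

text \<open>Tower function: tw 1 x = x, tw (k+1) x = 2 powr (tw k x). (tw 0 is a dummy value.)\<close>
fun tw :: "nat \<Rightarrow> real \<Rightarrow> real" where
  "tw 0 x = x"
| "tw (Suc 0) x = x"
| "tw (Suc (Suc k)) x = 2 powr (tw (Suc k) x)"

definition pairs2 :: "'a::linorder set \<Rightarrow> ('a \<times> 'a) set" where
  "pairs2 A = {(a, b). a \<in> A \<and> b \<in> A \<and> a < b}"

definition equiv_on :: "'a::linorder set \<Rightarrow> ('a \<times> 'a \<Rightarrow> real) \<Rightarrow> ('a \<times> 'a \<Rightarrow> real) \<Rightarrow> bool" where
  "equiv_on A \<phi> \<phi>' \<longleftrightarrow> (\<exists>\<rho>1 \<rho>2 :: 'a \<Rightarrow> real.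
      \<forall>(a, b) \<in> pairs2 A. \<phi> (a, b) = \<phi>' (a, b) - \<rho>1 a - \<rho>2 b)"

definition exp_separated :: "'b set \<Rightarrow> ('b \<Rightarrow> real) \<Rightarrow> bool" where
  "exp_separated B \<phi> \<longleftrightarrow>
     ((\<forall>b\<in>B. \<phi> b \<ge> 0) \<or> (\<forall>b\<in>B. \<phi> b \<le> 0)) \<and>
     (\<forall>b\<in>B. \<forall>b'\<in>B. b \<noteq> b' \<longrightarrow> \<bar>\<phi> b\<bar> \<ge> 2 * \<bar>\<phi> b'\<bar> \<or> \<bar>\<phi> b'\<bar> \<ge> 2 * \<bar>\<phi> b\<bar>)"

end

theory Submission
  imports Defs "HOL-Library.Ramsey" "HOL-Library.FuncSet"
begin

lemma pigeon_class:
  fixes P :: "'a set" and kap :: "'a \<Rightarrow> 'b"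
  assumes "finite P" "kap ` P \<subseteq> K" "finite K" "card K \<le> q"
  shows "\<exists>v. card P \<le> q * card {x\<in>P. kap x = v}"
proof (rule ccontr)
  assume H: "\<not> ?thesis"
  hence H': "\<And>v. q * card {x\<in>P. kap x = v} < card P" by (simp add: not_le)
  show False
  proof (cases "P = {}")
    case True then show False using H' by simp
  next
    case False
    then have Kne: "kap ` P \<noteq> {}" by simp
    have fin: "finite (kap ` P)" using assms by simp
    have "card P = card (\<Union>v\<in>kap ` P. {x\<in>P. kap x = v})"
      by (rule arg_cong[where f=card]) auto
    also have "\<dots> = (\<Sum>v\<in>kap ` P. card {x\<in>P. kap x = v})"
      by (rule card_UN_disjoint) (use assms in auto)
    finally have cP: "card P = (\<Sum>v\<in>kap ` P. card {x\<in>P. kap x = v})" .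
    have "q * card P = (\<Sum>v\<in>kap ` P. q * card {x\<in>P. kap x = v})"
      by (simp add: cP sum_distrib_left)
    also have "\<dots> < (\<Sum>v\<in>kap ` P. card P)"
      by (rule sum_strict_mono[OF fin Kne]) (use H' in auto)
    also have "\<dots> = card (kap ` P) * card P" by simp
    also have "\<dots> \<le> q * card P"
    proof -
      have "card (kap ` P) \<le> card K" using assms by (simp add: card_mono)
      then show ?thesis using assms by (simp add: mult_right_mono)
    qed
    finally show False by simp
  qed
qed

definition Inv :: "(nat set \<Rightarrow> 'c) \<Rightarrow> nat \<Rightarrow> nat set \<Rightarrow> nat set \<Rightarrow> bool" where
  "Inv f k A P \<longleftrightarrow> (\<forall>Z \<in> nsets A k. \<forall>x \<in> A \<union> P. \<forall>x' \<in> A \<union> P.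
      Max Z < x \<longrightarrow> Max Z < x' \<longrightarrow> f (insert x Z) = f (insert x' Z))"

lemma choose_le_pow_any: "(n::nat) choose r \<le> n ^ r"
  by (cases "r \<le> n") (auto simp: binomial_le_pow binomial_eq_0)

lemma EH_ext:
  fixes f :: "nat set \<Rightarrow> 'c"
  assumes C: "finite C" "card C \<le> c" "\<forall>Y. f Y \<in> C" and k: "1 \<le> k"
  shows "\<forall>A P. finite A \<longrightarrow> finite P \<longrightarrow> Inv f k A P \<longrightarrow> (\<forall>a\<in>A. \<forall>p\<in>P. a < p)
     \<longrightarrow> card A + s \<le> L \<longrightarrow> (c ^ (L^(k-1)) + 1) ^ s \<le> card P
     \<longrightarrow> (\<exists>E. A \<subseteq> E \<and> E \<subseteq> A \<union> P \<and> card E = card A + s \<and> Inv f k E {})"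
proof (induction s)
  case 0
  show ?case
  proof (intro allI impI)
    fix A P assume "finite A" "finite P" "Inv f k A P"
    then show "\<exists>E. A \<subseteq> E \<and> E \<subseteq> A \<union> P \<and> card E = card A + 0 \<and> Inv f k E {}"
      by (intro exI[of _ A]) (auto simp: Inv_def)
  qed
next
  case (Suc s)
  define q where "q = c ^ (L^(k-1))"
  have c1: "1 \<le> c"
  proof -
    have "C \<noteq> {}" using C(3) by auto
    then have "1 \<le> card C" using C(1) by (simp add: Suc_leI card_gt_0_iff)
    then show ?thesis using C(2) by simp
  qed
  have q1: "1 \<le> q" unfolding q_def using c1 by simp
  show ?case
  proof (intro allI impI)
    fix A P
    assume fA: "finite A" and fP: "finite P" and inv: "Inv f k A P"
      and lt: "\<forall>a\<in>A. \<forall>p\<in>P. a < p" and cA: "card A + Suc s \<le> L"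
      and cP: "(c ^ (L^(k-1)) + 1) ^ Suc s \<le> card P"
    have "1 \<le> (c ^ (L^(k-1)) + 1) ^ Suc s" by (rule one_le_power) simp
    then have "1 \<le> card P" using cP by linarith
    then have Pne: "P \<noteq> {}" by auto
    define a where "a = Min P"
    have aP: "a \<in> P" unfolding a_def using fP Pne by simp
    define P0 where "P0 = P - {a}"
    define kap where "kap = (\<lambda>x. restrict (\<lambda>Z0. f (insert x (insert a Z0))) (nsets A (k-1)))"
    define K where "K = PiE (nsets A (k-1)) (\<lambda>_. C)"
    have finK: "finite K" unfolding K_def using fA C(1)
      by (simp add: finite_PiE finite_imp_finite_nsets)
    have cardK: "card K \<le> q"
    proof -
      have "card K = card C ^ card (nsets A (k-1))"
        unfolding K_def using fA by (simp add: card_PiE finite_imp_finite_nsets)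
      also have "\<dots> \<le> c ^ card (nsets A (k-1))" using C(2) by (simp add: power_mono)
      also have "\<dots> \<le> c ^ (L^(k-1))"
      proof (rule power_increasing[OF _ c1])
        have "card (nsets A (k-1)) = card A choose (k-1)" by simp
        also have "\<dots> \<le> card A ^ (k-1)" by (rule choose_le_pow_any)
        also have "\<dots> \<le> L ^ (k-1)" using cA by (simp add: power_mono)
        finally show "card (nsets A (k-1)) \<le> L^(k-1)" .
      qed
      finally show ?thesis unfolding q_def .
    qed
    have kapK: "kap ` P0 \<subseteq> K" unfolding kap_def K_def using C(3) by auto
    obtain v where v: "card P0 \<le> q * card {x\<in>P0. kap x = v}"
      using pigeon_class[OF _ kapK finK cardK] fP unfolding P0_def by auto
    define P' where "P' = {x\<in>P0. kap x = v}"
    have cP0: "card P0 = card P - 1" unfolding P0_def using aP fP by simp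
    have "q * (q + 1) ^ s + 1 \<le> (q+1) ^ Suc s"
    proof -
      have "(q+1) ^ Suc s = q * (q+1)^s + (q+1)^s" by simp
      moreover have "1 \<le> (q+1)^s" by simp
      ultimately show ?thesis by linarith
    qed
    then have "q * (q + 1) ^ s \<le> q * card P'"
      using cP v cP0 unfolding q_def P'_def by linarith
    then have cP': "(q + 1) ^ s \<le> card P'" using q1 by simp
    have fP': "finite P'" unfolding P'_def P0_def using fP by simp
    have lt': "\<forall>a'\<in>insert a A. \<forall>p\<in>P'. a' < p"
    proof (intro ballI)
      fix a' p assume a': "a' \<in> insert a A" and p: "p \<in> P'"
      have pP: "p \<in> P" "p \<noteq> a" using p unfolding P'_def P0_def by auto
      have "a \<le> p" unfolding a_def using fP pP by simp
      then show "a' < p" using a' lt pP by auto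
    qed
    have aA: "a \<notin> A" using lt aP by auto
    have inv': "Inv f k (insert a A) P'"
      unfolding Inv_def
    proof (intro ballI impI)
      fix Z x x'
      assume Z: "Z \<in> nsets (insert a A) k" and x: "x \<in> insert a A \<union> P'" and x': "x' \<in> insert a A \<union> P'"
        and mx: "Max Z < x" and mx': "Max Z < x'"
      have fZ: "finite Z" and cZ: "card Z = k" and ZA: "Z \<subseteq> insert a A" using Z by (auto simp: nsets_def)
      have Zne: "Z \<noteq> {}" using cZ k by auto
      show "f (insert x Z) = f (insert x' Z)"
      proof (cases "a \<in> Z")
        case True
        have aM: "a \<le> Max Z" using True fZ by simp
        have xP': "x \<in> P'"
        proof -
          have "x \<notin> insert a A" using aM mx lt aP by fastforce
          then show ?thesis using x by auto
        qed
        have x'P': "x' \<in> P'"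
        proof -
          have "x' \<notin> insert a A" using aM mx' lt aP by fastforce
          then show ?thesis using x' by auto
        qed
        define Z0 where "Z0 = Z - {a}"
        have Z0n: "Z0 \<in> nsets A (k-1)" unfolding Z0_def nsets_def using ZA fZ cZ True by auto
        have ZZ: "Z = insert a Z0" unfolding Z0_def using True by auto
        have "kap x = v" "kap x' = v" using xP' x'P' unfolding P'_def by auto
        then have "kap x Z0 = kap x' Z0" by simp
        then show ?thesis unfolding kap_def using Z0n ZZ by simp
      next
        case False
        then have "Z \<in> nsets A k" using Z by (auto simp: nsets_def)
        moreover have "x \<in> A \<union> P" "x' \<in> A \<union> P" using x x' aP unfolding P'_def P0_def by auto
        ultimately show ?thesis using inv mx mx' unfolding Inv_def by blast
      qed
    qed
    have "card (insert a A) + s \<le> L" using cA fA aA by simp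
    moreover have "finite (insert a A)" using fA by simp
    ultimately obtain E where E: "insert a A \<subseteq> E" "E \<subseteq> insert a A \<union> P'" "card E = card (insert a A) + s" "Inv f k E {}"
      using Suc.IH[rule_format, of "insert a A" P'] fP' inv' lt' cP' unfolding q_def by blast
    show "\<exists>E. A \<subseteq> E \<and> E \<subseteq> A \<union> P \<and> card E = card A + Suc s \<and> Inv f k E {}"
      apply (rule exI[of _ E])
      using E aP fA aA unfolding P'_def P0_def by auto
  qed
qed

lemma EH:
  fixes f :: "nat set \<Rightarrow> 'c"
  assumes C: "finite C" "card C \<le> c" "\<forall>Y. f Y \<in> C" and k: "1 \<le> k"
    and X: "finite X" "(c ^ (L^(k-1)) + 1) ^ L \<le> card X"
  shows "\<exists>E \<subseteq> X. card E = L \<and> Inv f k E {}"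
proof -
  have inv: "Inv f k {} X" unfolding Inv_def using k by (auto simp: nsets_def)
  show ?thesis
    using EH_ext[OF C k, of L L, rule_format, of "{}" X] inv X by auto
qed

fun RB :: "nat \<Rightarrow> nat \<Rightarrow> nat \<Rightarrow> nat" where
  "RB c 0 m = m"
| "RB c (Suc 0) m = c * m"
| "RB c (Suc (Suc k)) m = (c ^ ((RB c (Suc k) m + 1) ^ k) + 1) ^ (RB c (Suc k) m + 1)"

lemma ramsey_expl:
  fixes f :: "nat set \<Rightarrow> 'c"
  assumes C: "finite C" "card C \<le> c"
  shows "1 \<le> k \<Longrightarrow> \<forall>Y. f Y \<in> C \<Longrightarrow> finite X \<Longrightarrow> RB c k m \<le> card X \<Longrightarrow>
     \<exists>H \<subseteq> X. card H = m \<and> (\<forall>Y\<in>nsets H k. \<forall>Y'\<in>nsets H k. f Y = f Y')"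
proof (induction k arbitrary: X f rule: nat_induct_at_least)
  case base
  have fC: "(\<lambda>x. f {x}) ` X \<subseteq> C" using base(1) by auto
  obtain v where v: "card X \<le> c * card {x\<in>X. f {x} = v}"
    using pigeon_class[OF base(2) _ C(1) C(2)] fC by blast
  have "RB c 1 m = c * m" by simp
  then have "c * m \<le> c * card {x\<in>X. f {x} = v}" using base(3) v by linarith
  moreover have "1 \<le> c"
  proof -
    have "C \<noteq> {}" using base(1) by auto
    then have "1 \<le> card C" using C(1) by (simp add: Suc_leI card_gt_0_iff)
    then show ?thesis using C(2) by simp
  qed
  ultimately have "m \<le> card {x\<in>X. f {x} = v}" by simp
  then obtain H where H: "H \<subseteq> {x\<in>X. f {x} = v}" "card H = m" by (meson obtain_subset_with_card_n)
  show ?case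
  proof (intro exI[of _ H] conjI ballI)
    show "H \<subseteq> X" using H by auto
    show "card H = m" by fact
    fix Y Y' assume "Y \<in> nsets H 1" "Y' \<in> nsets H 1"
    then obtain y y' where "Y = {y}" "Y' = {y'}" "y \<in> H" "y' \<in> H"
      by (auto simp: nsets_def card_Suc_eq)
    then show "f Y = f Y'" using H by auto
  qed
next
  case (Suc k)
  define L where "L = RB c k m + 1"
  have RBs: "RB c (Suc k) m = (c ^ (L ^ (k-1)) + 1) ^ L"
    using Suc.hyps unfolding L_def by (cases k) auto
  obtain E where E: "E \<subseteq> X" "card E = L" "Inv f k E {}"
    using EH[OF C Suc.prems(1) Suc.hyps Suc.prems(2)] Suc.prems(3) RBs by auto
  have fE: "finite E" using E Suc.prems(2) finite_subset by blast
  have Ene: "E \<noteq> {}" using E(2) L_def by auto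
  define e where "e = Max E"
  have eE: "e \<in> E" unfolding e_def using fE Ene by simp
  define E' where "E' = E - {e}"
  have cE': "card E' = RB c k m" unfolding E'_def using E(2) eE fE L_def by simp
  define g where "g = (\<lambda>Z. f (insert e Z))"
  have gC: "\<forall>Y. g Y \<in> C" unfolding g_def using Suc.prems(1) by auto
  obtain H where H: "H \<subseteq> E'" "card H = m" "\<forall>Y\<in>nsets H k. \<forall>Y'\<in>nsets H k. g Y = g Y'"
    using Suc.IH[of g E'] gC fE cE' unfolding E'_def by auto
  have key: "\<And>Y. Y \<in> nsets H (Suc k) \<Longrightarrow> f Y = g (Y - {Max Y}) \<and> Y - {Max Y} \<in> nsets H k"
  proof -
    fix Y assume Y: "Y \<in> nsets H (Suc k)"
    have fY: "finite Y" and cY: "card Y = Suc k" and YH: "Y \<subseteq> H" using Y by (auto simp: nsets_def)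
    have Yne: "Y \<noteq> {}" using cY by auto
    define y where "y = Max Y"
    have yY: "y \<in> Y" unfolding y_def using fY Yne by simp
    define Z where "Z = Y - {y}"
    have cZ: "card Z = k" unfolding Z_def using cY yY fY by simp
    have Zne: "Z \<noteq> {}" using cZ Suc.hyps by auto
    have fZ: "finite Z" unfolding Z_def using fY by simp
    have ZH: "Z \<in> nsets H k" unfolding nsets_def using YH fZ cZ Z_def by auto
    have ZE: "Z \<in> nsets E k" using ZH H(1) unfolding nsets_def E'_def by auto
    have mZ: "Max Z < y"
    proof -
      have "Max Z \<in> Z" using fZ Zne by simp
      then have "Max Z \<in> Y" "Max Z \<noteq> y" unfolding Z_def by auto
      moreover have "Max Z \<le> y" unfolding y_def using \<open>Max Z \<in> Y\<close> fY by simp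
      ultimately show ?thesis by simp
    qed
    have yE: "y \<in> E" "y \<noteq> e" using yY YH H(1) unfolding E'_def by auto
    have "y \<le> e" unfolding e_def using yE fE by simp
    then have mZe: "Max Z < e" using mZ by simp
    have YZ: "Y = insert y Z" unfolding Z_def using yY by auto
    have yU: "y \<in> E \<union> {}" "e \<in> E \<union> {}" using yE eE by auto
    have "f (insert y Z) = f (insert e Z)"
      using E(3) ZE yU mZ mZe unfolding Inv_def by blast
    then have "f Y = f (insert e Z)" using YZ by simp
    then show "f Y = g (Y - {Max Y}) \<and> Y - {Max Y} \<in> nsets H k"
      unfolding g_def using ZH Z_def y_def by simp
  qed
  show ?case
  proof (intro exI[of _ H] conjI ballI)
    show "H \<subseteq> X" using H(1) E(1) unfolding E'_def by auto
    show "card H = m" by fact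
    fix Y Y' assume "Y \<in> nsets H (Suc k)" "Y' \<in> nsets H (Suc k)"
    then show "f Y = f Y'" using key[of Y] key[of Y'] H(3) by auto
  qed
qed


fun tn :: "nat \<Rightarrow> nat \<Rightarrow> nat" where
  "tn 0 x = x"
| "tn (Suc k) x = 2 ^ tn k x"

lemma tn_mono: "x \<le> y \<Longrightarrow> tn k x \<le> tn k y"
  by (induction k) auto

lemma tn_ge: "x \<le> tn k x"
proof (induction k)
  case 0 then show ?case by simp
next
  case (Suc k)
  have "tn k x < 2 ^ tn k x" by (rule less_exp)
  then show ?case using Suc by (simp only: tn.simps)
qed

lemma pow_ge_mult: "1 \<le> A \<Longrightarrow> 2 \<le> (z::nat) \<Longrightarrow> A * z \<le> z ^ A"
proof (induction A rule: nat_induct_at_least)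
  case base then show ?case by simp
next
  case (Suc n)
  have "Suc n * z = n * z + z" by simp
  also have "\<dots> \<le> z ^ n + z" using Suc by simp
  also have "\<dots> \<le> z ^ n + z ^ n"
  proof -
    have "z ^ 1 \<le> z ^ n" using Suc by (intro power_increasing) auto
    then show ?thesis by simp
  qed
  also have "\<dots> \<le> z * z ^ n" using Suc by (simp add: mult_2[symmetric] mult_right_mono)
  finally show ?case by simp
qed

lemma tn_scale: "1 \<le> y \<Longrightarrow> 1 \<le> A \<Longrightarrow> A * tn i y \<le> tn i (A * y)"
proof (induction i)
  case 0 then show ?case by simp
next
  case (Suc i)
  have z1: "1 \<le> tn i y" using tn_ge[of y i] Suc by simp
  have "A * tn (Suc i) y = A * 2 ^ tn i y" by simp
  also have "\<dots> \<le> (2 ^ tn i y) ^ A"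
  proof (rule pow_ge_mult)
    show "2 \<le> (2::nat) ^ tn i y" using z1 by (metis power_one_right power_increasing one_le_numeral)
    show "1 \<le> A" using Suc by simp
  qed
  also have "\<dots> = 2 ^ (A * tn i y)" by (simp add: power_mult[symmetric] mult.commute)
  also have "\<dots> \<le> 2 ^ tn i (A * y)" using Suc by (intro power_increasing) auto
  finally show ?case by simp
qed

lemma tw_tn: "tw (Suc k) (real x) = real (tn k x)"
proof (induction k)
  case 0 then show ?case by simp
next
  case (Suc k)
  have "tw (Suc (Suc k)) (real x) = 2 powr tw (Suc k) (real x)" by simp
  also have "\<dots> = 2 powr real (tn k x)" using Suc by simp
  also have "\<dots> = real (2 ^ tn k x)" by (simp add: powr_realpow)
  finally show ?case by simp
qed

lemma tw_mono: assumes "x \<le> y" shows "tw k x \<le> tw k y"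
proof (induction k)
  case 0 then show ?case using assms by simp
next
  case (Suc k) then show ?case using assms by (cases k) (auto intro: powr_mono)
qed


definition Rset :: "real set" where "Rset = {-4, -1, 0, 1, 4}"

definition DD :: "(nat \<times> nat \<Rightarrow> real) \<Rightarrow> nat \<Rightarrow> nat \<Rightarrow> nat \<Rightarrow> nat \<Rightarrow> real" where
  "DD \<psi> i j k l = \<psi> (i,k) - \<psi> (i,l) - \<psi> (j,k) + \<psi> (j,l)"

definition TP :: "(nat \<times> nat \<Rightarrow> real) \<Rightarrow> nat \<Rightarrow> bool" where
  "TP \<psi> M \<longleftrightarrow> (\<forall>U g. finite U \<longrightarrow> card U \<le> 8 \<longrightarrow> U \<subseteq> {..<M} \<longrightarrow> g ` U \<subseteq> {..<M} \<longrightarrow> strict_mono_on U g \<longrightarrow>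
    (\<forall>x1\<in>U. \<forall>x2\<in>U. \<forall>x3\<in>U. \<forall>x4\<in>U. \<forall>y1\<in>U. \<forall>y2\<in>U. \<forall>y3\<in>U. \<forall>y4\<in>U. \<forall>r1\<in>Rset. \<forall>r2\<in>Rset.
      (r2 * DD \<psi> y1 y2 y3 y4 \<le> r1 * DD \<psi> x1 x2 x3 x4) \<longleftrightarrow>
      (r2 * DD \<psi> (g y1) (g y2) (g y3) (g y4) \<le> r1 * DD \<psi> (g x1) (g x2) (g x3) (g x4))))"

lemma TP_use:
  assumes "TP \<psi> M" "finite U" "card U \<le> 8" "U \<subseteq> {..<M}" "g ` U \<subseteq> {..<M}" "strict_mono_on U g"
    "x1 \<in> U" "x2 \<in> U" "x3 \<in> U" "x4 \<in> U" "y1 \<in> U" "y2 \<in> U" "y3 \<in> U" "y4 \<in> U"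
    "r1 \<in> Rset" "r2 \<in> Rset"
  shows "(r2 * DD \<psi> y1 y2 y3 y4 \<le> r1 * DD \<psi> x1 x2 x3 x4) \<longleftrightarrow>
      (r2 * DD \<psi> (g y1) (g y2) (g y3) (g y4) \<le> r1 * DD \<psi> (g x1) (g x2) (g x3) (g x4))"
  by (rule assms(1)[unfolded TP_def, rule_format, OF assms(2-16)])

lemma TP_neg:
  assumes "TP \<psi> M" shows "TP (\<lambda>p. - \<psi> p) M"
  unfolding TP_def
proof (intro allI impI ballI)
  fix U g x1 x2 x3 x4 y1 y2 y3 y4 r1 r2
  assume A: "finite U" "card U \<le> 8" "U \<subseteq> {..<M}" "g ` U \<subseteq> {..<M}" "strict_mono_on U g"
    "x1 \<in> U" "x2 \<in> U" "x3 \<in> U" "x4 \<in> U" "y1 \<in> U" "y2 \<in> U" "y3 \<in> U" "y4 \<in> U"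
    "r1 \<in> Rset" "r2 \<in> Rset"
  have e: "\<And>a b c d. DD (\<lambda>p. - \<psi> p) a b c d = - DD \<psi> a b c d" unfolding DD_def by simp
  have "(r2 * DD (\<lambda>p. - \<psi> p) y1 y2 y3 y4 \<le> r1 * DD (\<lambda>p. - \<psi> p) x1 x2 x3 x4)
      \<longleftrightarrow> (r1 * DD \<psi> x1 x2 x3 x4 \<le> r2 * DD \<psi> y1 y2 y3 y4)" by (simp add: e)
  also have "\<dots> \<longleftrightarrow> (r1 * DD \<psi> (g x1) (g x2) (g x3) (g x4) \<le> r2 * DD \<psi> (g y1) (g y2) (g y3) (g y4))"
    by (rule TP_use[OF assms A(1-5) A(10-13) A(6-9) A(15) A(14)])
  also have "\<dots> \<longleftrightarrow> (r2 * DD (\<lambda>p. - \<psi> p) (g y1) (g y2) (g y3) (g y4) \<le> r1 * DD (\<lambda>p. - \<psi> p) (g x1) (g x2) (g x3) (g x4))"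
    by (simp add: e)
  finally show "(r2 * DD (\<lambda>p. - \<psi> p) y1 y2 y3 y4 \<le> r1 * DD (\<lambda>p. - \<psi> p) x1 x2 x3 x4) \<longleftrightarrow>
      (r2 * DD (\<lambda>p. - \<psi> p) (g y1) (g y2) (g y3) (g y4) \<le> r1 * DD (\<lambda>p. - \<psi> p) (g x1) (g x2) (g x3) (g x4))" .
qed

lemma TP_list:
  assumes TP: "TP \<psi> M" and sx: "sorted_wrt (<) xs" and sy: "sorted_wrt (<) ys"
    and len: "length xs = length ys" "length xs \<le> 8"
    and bx: "set xs \<subseteq> {..<M}" and by': "set ys \<subseteq> {..<M}"
    and idx: "ia < length xs" "ib < length xs" "ic < length xs" "iz < length xs"
      "ja < length xs" "jb < length xs" "jc < length xs" "jz < length xs"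
    and r: "r1 \<in> Rset" "r2 \<in> Rset"
  shows "(r2 * DD \<psi> (xs!ja) (xs!jb) (xs!jc) (xs!jz) \<le> r1 * DD \<psi> (xs!ia) (xs!ib) (xs!ic) (xs!iz)) \<longleftrightarrow>
      (r2 * DD \<psi> (ys!ja) (ys!jb) (ys!jc) (ys!jz) \<le> r1 * DD \<psi> (ys!ia) (ys!ib) (ys!ic) (ys!iz))"
proof -
  define n where "n = length xs"
  define g where "g = (\<lambda>x. ys ! (the_inv_into {..<n} ((!) xs) x))"
  have dx: "distinct xs" using sx by (simp add: strict_sorted_iff)
  have inj: "inj_on ((!) xs) {..<n}" unfolding n_def using dx by (simp add: inj_on_nth)
  have gx: "\<And>i. i < n \<Longrightarrow> g (xs ! i) = ys ! i"
    unfolding g_def using inj by (simp add: the_inv_into_f_f)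
  have ord: "\<And>i j. i < n \<Longrightarrow> j < n \<Longrightarrow> xs ! i < xs ! j \<Longrightarrow> i < j"
  proof -
    fix i j assume ij: "i < n" "j < n" "xs ! i < xs ! j"
    show "i < j"
    proof (rule ccontr)
      assume "\<not> i < j"
      then have "j < i \<or> j = i" by auto
      then show False
      proof
        assume "j < i" then have "xs ! j < xs ! i" using sx ij unfolding n_def by (simp add: sorted_wrt_nth_less)
        then show False using ij by simp
      next
        assume "j = i" then show False using ij by simp
      qed
    qed
  qed
  have sm: "strict_mono_on (set xs) g"
  proof (rule strict_mono_onI)
    fix x y assume "x \<in> set xs" "y \<in> set xs" "x < y"
    then obtain i j where ij: "i < n" "j < n" "x = xs ! i" "y = xs ! j" unfolding n_def by (auto simp: in_set_conv_nth)
    then have "i < j" using ord \<open>x < y\<close> by simp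
    then show "g x < g y" using ij gx sy len unfolding n_def by (simp add: sorted_wrt_nth_less)
  qed
  have img: "g ` set xs \<subseteq> {..<M}"
  proof
    fix z assume "z \<in> g ` set xs"
    then obtain i where "i < n" "z = g (xs ! i)" unfolding n_def by (auto simp: in_set_conv_nth)
    then have "z \<in> set ys" using gx len unfolding n_def by auto
    then show "z \<in> {..<M}" using by' by auto
  qed
  have cU: "card (set xs) \<le> 8" using len(2) by (metis card_length le_trans)
  have mem: "\<And>i. i < n \<Longrightarrow> xs ! i \<in> set xs" unfolding n_def by simp
  have "(r2 * DD \<psi> (xs!ja) (xs!jb) (xs!jc) (xs!jz) \<le> r1 * DD \<psi> (xs!ia) (xs!ib) (xs!ic) (xs!iz)) \<longleftrightarrow>
      (r2 * DD \<psi> (g (xs!ja)) (g (xs!jb)) (g (xs!jc)) (g (xs!jz)) \<le> r1 * DD \<psi> (g (xs!ia)) (g (xs!ib)) (g (xs!ic)) (g (xs!iz)))"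
    by (rule TP_use[OF TP finite_set cU bx img sm nth_mem[OF idx(1)] nth_mem[OF idx(2)] nth_mem[OF idx(3)]
          nth_mem[OF idx(4)] nth_mem[OF idx(5)] nth_mem[OF idx(6)] nth_mem[OF idx(7)] nth_mem[OF idx(8)] r])
  also have "\<dots> \<longleftrightarrow> (r2 * DD \<psi> (ys!ja) (ys!jb) (ys!jc) (ys!jz) \<le> r1 * DD \<psi> (ys!ia) (ys!ib) (ys!ic) (ys!iz))"
    using idx gx n_def by simp
  finally show ?thesis .
qed

definition rk :: "nat set \<Rightarrow> nat \<Rightarrow> nat" where "rk Q x = card {y\<in>Q. y < x}"
definition elt :: "nat set \<Rightarrow> nat \<Rightarrow> nat" where "elt Q p = (THE x. x \<in> Q \<and> rk Q x = p)"

lemma rk_less: "finite Q \<Longrightarrow> x \<in> Q \<Longrightarrow> x' \<in> Q \<Longrightarrow> x < x' \<Longrightarrow> rk Q x < rk Q x'"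
  unfolding rk_def by (rule psubset_card_mono) auto

lemma rk_inj:
  assumes "finite Q" "x \<in> Q" "x' \<in> Q" "rk Q x = rk Q x'" shows "x = x'"
proof (rule ccontr)
  assume "x \<noteq> x'"
  then consider "x < x'" | "x' < x" by linarith
  then show False
  proof cases
    case 1 then show False using rk_less[OF assms(1) assms(2) assms(3)] assms(4) by simp
  next
    case 2 then show False using rk_less[OF assms(1) assms(3) assms(2)] assms(4) by simp
  qed
qed

lemma elt_rk: "finite Q \<Longrightarrow> x \<in> Q \<Longrightarrow> elt Q (rk Q x) = x"
  unfolding elt_def by (rule the_equality) (auto intro: rk_inj)

lemma rk_bound: "finite Q \<Longrightarrow> x \<in> Q \<Longrightarrow> rk Q x < card Q"
  unfolding rk_def by (rule psubset_card_mono) auto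

lemma rk_image:
  assumes "finite A" "strict_mono_on A f" "x \<in> A"
  shows "rk (f ` A) (f x) = rk A x"
proof -
  have inj: "inj_on f A" using assms(2) by (rule strict_mono_on_imp_inj_on)
  have "{y \<in> f ` A. y < f x} = f ` {z\<in>A. z < x}"
  proof
    show "{y \<in> f ` A. y < f x} \<subseteq> f ` {z\<in>A. z < x}"
    proof
      fix y assume "y \<in> {y \<in> f ` A. y < f x}"
      then obtain z where z: "z \<in> A" "y = f z" "f z < f x" by auto
      have "z < x"
      proof (rule ccontr)
        assume "\<not> z < x"
        then have "x < z \<or> x = z" by auto
        then show False
        proof
          assume "x < z" then have "f x < f z" using strict_mono_onD[OF assms(2) assms(3) z(1)] by blast
          then show False using z by simp
        qed (use z in simp)
      qed
      then show "y \<in> f ` {z\<in>A. z < x}" using z by auto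
    qed
  next
    show "f ` {z\<in>A. z < x} \<subseteq> {y \<in> f ` A. y < f x}"
      using strict_mono_onD[OF assms(2) _ assms(3)] by auto
  qed
  then have "rk (f ` A) (f x) = card (f ` {z\<in>A. z < x})" unfolding rk_def by simp
  also have "\<dots> = card {z\<in>A. z < x}" by (rule card_image) (use inj in \<open>auto intro: inj_on_subset\<close>)
  finally show ?thesis unfolding rk_def .
qed

type_synonym pat = "(nat \<times> nat \<times> nat \<times> nat) \<times> (nat \<times> nat \<times> nat \<times> nat) \<times> real \<times> real"

definition Dom :: "pat set" where
  "Dom = ({..<8::nat} \<times> {..<8::nat} \<times> {..<8::nat} \<times> {..<8::nat}) \<times>
         ({..<8::nat} \<times> {..<8::nat} \<times> {..<8::nat} \<times> {..<8::nat}) \<times> Rset \<times> Rset"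

fun chk :: "(nat \<times> nat \<Rightarrow> real) \<Rightarrow> nat set \<Rightarrow> pat \<Rightarrow> bool" where
  "chk \<phi> Q ((p1,p2,p3,p4),(q1,q2,q3,q4),r1,r2) =
     (r2 * DD \<phi> (elt Q q1) (elt Q q2) (elt Q q3) (elt Q q4) \<le> r1 * DD \<phi> (elt Q p1) (elt Q p2) (elt Q p3) (elt Q p4))"

definition chi :: "(nat \<times> nat \<Rightarrow> real) \<Rightarrow> nat set \<Rightarrow> pat set" where
  "chi \<phi> Q = {t \<in> Dom. chk \<phi> Q t}"

lemma finite_Dom: "finite Dom"
  unfolding Dom_def Rset_def by simp

lemma chi_in: "chi \<phi> Q \<in> Pow Dom" unfolding chi_def by auto

lemma HOM_TP:
  assumes fH: "finite H" and cH: "card H = m" and m8: "8 \<le> m"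
    and hom: "\<forall>Y\<in>nsets H 8. \<forall>Y'\<in>nsets H 8. chi \<phi> Y = chi \<phi> Y'"
    and hdef: "h = (!) (sorted_list_of_set H)"
  shows "TP (\<lambda>(i,j). \<phi> (h i, h j)) (m - 8)"
  unfolding TP_def
proof (intro allI impI ballI)
  fix U g x1 x2 x3 x4 y1 y2 y3 y4 r1 r2
  assume A: "finite U" "card U \<le> 8" "U \<subseteq> {..<m-8}" "g ` U \<subseteq> {..<m-8}" "strict_mono_on U g"
    and xs: "x1 \<in> U" "x2 \<in> U" "x3 \<in> U" "x4 \<in> U" and ys: "y1 \<in> U" "y2 \<in> U" "y3 \<in> U" "y4 \<in> U"
    and r: "r1 \<in> Rset" "r2 \<in> Rset"
  define M where "M = m - 8"
  define Pad where "Pad = {M..<M + (8 - card U)}"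
  define U' where "U' = U \<union> Pad"
  define G where "G = (\<lambda>x. if x \<in> U then g x else x)"
  have disj: "U \<inter> Pad = {}" using A(3) unfolding Pad_def M_def by auto
  have fU': "finite U'" unfolding U'_def Pad_def using A(1) by simp
  have cU': "card U' = 8" unfolding U'_def using disj A(1,2) by (simp add: card_Un_disjoint Pad_def)
  have smG: "strict_mono_on U' G"
  proof (rule strict_mono_onI)
    fix x y assume xy: "x \<in> U'" "y \<in> U'" "x < y"
    show "G x < G y"
    proof (cases "x \<in> U")
      case True
      show ?thesis
      proof (cases "y \<in> U")
        case True
        then show ?thesis using \<open>x \<in> U\<close> xy strict_mono_onD[OF A(5)] unfolding G_def by auto
      next
        case False
        then have "y \<in> Pad" using xy unfolding U'_def by auto
        then have "M \<le> y" unfolding Pad_def by auto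
        moreover have "g x < M" using A(4) True unfolding M_def by auto
        ultimately show ?thesis using True False unfolding G_def by auto
      qed
    next
      case False
      then have "x \<in> Pad" using xy unfolding U'_def by auto
      then have "M \<le> x" unfolding Pad_def by auto
      then have "y \<notin> U" using xy A(3) unfolding M_def by auto
      then show ?thesis using False xy unfolding G_def by auto
    qed
  qed
  have U'm: "U' \<subseteq> {..<m}"
  proof -
    have "8 \<le> m \<or> U = {}" using A(3) by (cases "U = {}") auto
    show ?thesis
    proof
      fix x assume "x \<in> U'"
      then have "x \<in> U \<or> x \<in> Pad" unfolding U'_def by auto
      then show "x \<in> {..<m}"
      proof
        assume "x \<in> U" then show ?thesis using A(3) by auto
      next
        assume "x \<in> Pad"
        then have "x < M + (8 - card U)" unfolding Pad_def by auto
        moreover have "card U \<le> 8" by (rule A(2))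
        ultimately show ?thesis unfolding M_def using m8 by auto
      qed
    qed
  qed
  have GU'm: "G ` U' \<subseteq> {..<m}"
  proof
    fix z assume "z \<in> G ` U'"
    then obtain x where x: "x \<in> U'" "z = G x" by auto
    show "z \<in> {..<m}"
    proof (cases "x \<in> U")
      case True then show ?thesis using x A(4) unfolding G_def by auto
    next
      case False then show ?thesis using x U'm unfolding G_def by auto
    qed
  qed
  define L where "L = sorted_list_of_set H"
  have lenL: "length L = m" unfolding L_def using cH by simp
  have sL: "sorted_wrt (<) L" unfolding L_def by simp
  have smh: "strict_mono_on {..<m} h"
    by (rule strict_mono_onI) (use sL lenL in \<open>auto simp: hdef L_def[symmetric] sorted_wrt_nth_less\<close>)
  have hH: "\<And>i. i < m \<Longrightarrow> h i \<in> H"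
    unfolding hdef L_def[symmetric] using lenL L_def fH by (metis nth_mem set_sorted_list_of_set)
  have injh: "inj_on h {..<m}" using smh by (rule strict_mono_on_imp_inj_on)
  define Q1 where "Q1 = h ` U'"
  define Q2 where "Q2 = h ` (G ` U')"
  have cG: "card (G ` U') = 8" using cU' strict_mono_on_imp_inj_on[OF smG] by (simp add: card_image)
  have Q1n: "Q1 \<in> nsets H 8" unfolding Q1_def nsets_def using U'm hH fU' cU' injh
    by (auto simp: card_image inj_on_subset)
  have Q2n: "Q2 \<in> nsets H 8" unfolding Q2_def nsets_def using GU'm hH fU' cG injh
    by (auto simp: card_image inj_on_subset)
  have chieq: "chi \<phi> Q1 = chi \<phi> Q2" using hom Q1n Q2n by blast
  have smhU: "strict_mono_on U' h" using smh U'm by (rule monotone_on_subset)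
  have smhGU: "strict_mono_on (G ` U') h" using smh GU'm by (rule monotone_on_subset)
  have fQ1: "finite Q1" "finite Q2" unfolding Q1_def Q2_def using fU' by auto
  have rk1: "\<And>x. x \<in> U' \<Longrightarrow> rk Q1 (h x) = rk U' x"
    unfolding Q1_def using fU' smhU by (rule rk_image)
  have rk2: "\<And>x. x \<in> U' \<Longrightarrow> rk Q2 (h (G x)) = rk U' x"
  proof -
    fix x assume x: "x \<in> U'"
    have "rk Q2 (h (G x)) = rk (G ` U') (G x)"
      unfolding Q2_def using fU' smhGU x by (intro rk_image) auto
    also have "\<dots> = rk U' x" using fU' smG x by (rule rk_image)
    finally show "rk Q2 (h (G x)) = rk U' x" .
  qed
  have e1: "\<And>x. x \<in> U' \<Longrightarrow> elt Q1 (rk U' x) = h x"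
    using rk1 elt_rk fQ1(1) unfolding Q1_def by (metis image_eqI)
  have e2: "\<And>x. x \<in> U' \<Longrightarrow> elt Q2 (rk U' x) = h (G x)"
    using rk2 elt_rk fQ1(2) unfolding Q2_def by (metis image_eqI)
  have rb: "\<And>x. x \<in> U' \<Longrightarrow> rk U' x < 8" using rk_bound fU' cU' by metis
  have inU': "\<And>x. x \<in> U \<Longrightarrow> x \<in> U'" unfolding U'_def by simp
  have Gg: "\<And>x. x \<in> U \<Longrightarrow> G x = g x" unfolding G_def by simp
  define t where "t = ((rk U' x1, rk U' x2, rk U' x3, rk U' x4), (rk U' y1, rk U' y2, rk U' y3, rk U' y4), r1, r2)"
  have tD: "t \<in> Dom" unfolding t_def Dom_def using rb inU' xs ys r by auto
  have c1: "chk \<phi> Q1 t \<longleftrightarrow> (r2 * DD \<phi> (h y1) (h y2) (h y3) (h y4) \<le> r1 * DD \<phi> (h x1) (h x2) (h x3) (h x4))"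
    unfolding t_def using e1 inU' xs ys by simp
  have c2: "chk \<phi> Q2 t \<longleftrightarrow> (r2 * DD \<phi> (h (g y1)) (h (g y2)) (h (g y3)) (h (g y4)) \<le> r1 * DD \<phi> (h (g x1)) (h (g x2)) (h (g x3)) (h (g x4)))"
    unfolding t_def using e2 inU' xs ys Gg by simp
  have "chk \<phi> Q1 t \<longleftrightarrow> chk \<phi> Q2 t" using chieq tD unfolding chi_def by blast
  moreover have "\<And>a b c d. DD (\<lambda>(i,j). \<phi> (h i, h j)) a b c d = DD \<phi> (h a) (h b) (h c) (h d)"
    unfolding DD_def by simp
  ultimately show "(r2 * DD (\<lambda>(i,j). \<phi> (h i, h j)) y1 y2 y3 y4 \<le> r1 * DD (\<lambda>(i,j). \<phi> (h i, h j)) x1 x2 x3 x4) \<longleftrightarrow>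
      (r2 * DD (\<lambda>(i,j). \<phi> (h i, h j)) (g y1) (g y2) (g y3) (g y4) \<le> r1 * DD (\<lambda>(i,j). \<phi> (h i, h j)) (g x1) (g x2) (g x3) (g x4))"
    using c1 c2 by simp
qed


lemma DD_row: "DD \<psi> x x'' y y' = DD \<psi> x x' y y' + DD \<psi> x' x'' y y'" by (simp add: DD_def)
lemma DD_col: "DD \<psi> x x' y y'' = DD \<psi> x x' y y' + DD \<psi> x x' y' y''" by (simp add: DD_def)

lemma TP4:
  assumes tp: "TP \<psi> M" and o: "a<b" "b<c" "c<d" "d<M" "a'<b'" "b'<c'" "c'<d'" "d'<M"
    and r: "r1 \<in> Rset" "r2 \<in> Rset"
  shows "(r2 * DD \<psi> a b c d \<le> r1 * DD \<psi> a b c d) \<longleftrightarrow> (r2 * DD \<psi> a' b' c' d' \<le> r1 * DD \<psi> a' b' c' d')"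
proof -
  have s: "sorted_wrt (<) [a,b,c,d]" "sorted_wrt (<) [a',b',c',d']" using o by auto
  have b: "set [a,b,c,d] \<subseteq> {..<M}" "set [a',b',c',d'] \<subseteq> {..<M}" using o by auto
  show ?thesis
    using TP_list[where ia=0 and ib=1 and ic=2 and iz=3 and ja=0 and jb=1 and jc=2 and jz=3,
        OF tp s(1) s(2) _ _ b(1) b(2) _ _ _ _ _ _ _ _ r, simplified] by simp
qed

lemma TP5:
  assumes tp: "TP \<psi> M" and o: "a<b" "b<c" "c<d" "d<e" "e<M" "a'<b'" "b'<c'" "c'<d'" "d'<e'" "e'<M"
    and r: "r1 \<in> Rset" "r2 \<in> Rset"
    and ix: "ia < 5" "ib < 5" "ic < 5" "iz < 5" "ja < 5" "jb < 5" "jc < 5" "jz < 5"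
  shows "(r2 * DD \<psi> ([a,b,c,d,e]!ja) ([a,b,c,d,e]!jb) ([a,b,c,d,e]!jc) ([a,b,c,d,e]!jz)
            \<le> r1 * DD \<psi> ([a,b,c,d,e]!ia) ([a,b,c,d,e]!ib) ([a,b,c,d,e]!ic) ([a,b,c,d,e]!iz)) \<longleftrightarrow>
         (r2 * DD \<psi> ([a',b',c',d',e']!ja) ([a',b',c',d',e']!jb) ([a',b',c',d',e']!jc) ([a',b',c',d',e']!jz)
            \<le> r1 * DD \<psi> ([a',b',c',d',e']!ia) ([a',b',c',d',e']!ib) ([a',b',c',d',e']!ic) ([a',b',c',d',e']!iz))"
proof -
  have s: "sorted_wrt (<) [a,b,c,d,e]" "sorted_wrt (<) [a',b',c',d',e']" using o by auto
  have b: "set [a,b,c,d,e] \<subseteq> {..<M}" "set [a',b',c',d',e'] \<subseteq> {..<M}" using o by auto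
  show ?thesis
    by (rule TP_list[OF tp s(1) s(2) _ _ b(1) b(2) _ _ _ _ _ _ _ _ r]) (use ix in simp_all)
qed

lemma TP_R:
  assumes tp: "TP \<psi> M" and o: "a<b" "b<c" "c<d" "d<e" "e<M" "a'<b'" "b'<c'" "c'<d'" "d'<e'" "e'<M"
    and r: "r1 \<in> Rset" "r2 \<in> Rset"
  shows "(r2 * DD \<psi> a b d e \<le> r1 * DD \<psi> b c d e) \<longleftrightarrow> (r2 * DD \<psi> a' b' d' e' \<le> r1 * DD \<psi> b' c' d' e')"
  using TP5[where ia=1 and ib=2 and ic=3 and iz=4 and ja=0 and jb=1 and jc=3 and jz=4, OF tp o r, simplified] by simp

lemma TP_R':
  assumes tp: "TP \<psi> M" and o: "a<b" "b<c" "c<d" "d<e" "e<M" "a'<b'" "b'<c'" "c'<d'" "d'<e'" "e'<M"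
    and r: "r1 \<in> Rset" "r2 \<in> Rset"
  shows "(r2 * DD \<psi> b c d e \<le> r1 * DD \<psi> a b d e) \<longleftrightarrow> (r2 * DD \<psi> b' c' d' e' \<le> r1 * DD \<psi> a' b' d' e')"
  using TP5[where ja=1 and jb=2 and jc=3 and jz=4 and ia=0 and ib=1 and ic=3 and iz=4, OF tp o r, simplified] by simp

lemma TP_C:
  assumes tp: "TP \<psi> M" and o: "a<b" "b<c" "c<d" "d<e" "e<M" "a'<b'" "b'<c'" "c'<d'" "d'<e'" "e'<M"
    and r: "r1 \<in> Rset" "r2 \<in> Rset"
  shows "(r2 * DD \<psi> a b c d \<le> r1 * DD \<psi> a b d e) \<longleftrightarrow> (r2 * DD \<psi> a' b' c' d' \<le> r1 * DD \<psi> a' b' d' e')"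
  using TP5[where ja=0 and jb=1 and jc=2 and jz=3 and ia=0 and ib=1 and ic=3 and iz=4, OF tp o r, simplified] by simp

lemma TP_C':
  assumes tp: "TP \<psi> M" and o: "a<b" "b<c" "c<d" "d<e" "e<M" "a'<b'" "b'<c'" "c'<d'" "d'<e'" "e'<M"
    and r: "r1 \<in> Rset" "r2 \<in> Rset"
  shows "(r2 * DD \<psi> a b d e \<le> r1 * DD \<psi> a b c d) \<longleftrightarrow> (r2 * DD \<psi> a' b' d' e' \<le> r1 * DD \<psi> a' b' c' d')"
  using TP5[where ia=0 and ib=1 and ic=2 and iz=3 and ja=0 and jb=1 and jc=3 and jz=4, OF tp o r, simplified] by simp

lemma R14: "(1::real) \<in> Rset" "(4::real) \<in> Rset" "(0::real) \<in> Rset" unfolding Rset_def by auto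


locale posctx =
  fixes \<psi> :: "nat \<times> nat \<Rightarrow> real" and M n :: nat
  assumes tp: "TP \<psi> M" and pos0: "0 < DD \<psi> 0 1 2 3" and Mn: "10 * n + 12 \<le> M"
begin

lemma M12: "12 \<le> M" using Mn by simp

lemma pos: "x1 < x2 \<Longrightarrow> x2 < x3 \<Longrightarrow> x3 < x4 \<Longrightarrow> x4 < M \<Longrightarrow> 0 < DD \<psi> x1 x2 x3 x4"
proof -
  assume o: "x1 < x2" "x2 < x3" "x3 < x4" "x4 < M"
  have "(1 * DD \<psi> 0 1 2 3 \<le> 0 * DD \<psi> 0 1 2 3) \<longleftrightarrow> (1 * DD \<psi> x1 x2 x3 x4 \<le> 0 * DD \<psi> x1 x2 x3 x4)"
    by (rule TP4[OF tp _ _ _ _ o R14(3) R14(1)]) (use M12 in auto)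
  then show ?thesis using pos0 by simp
qed

definition "Rp \<longleftrightarrow> (\<forall>a b c d e. a<b \<longrightarrow> b<c \<longrightarrow> c<d \<longrightarrow> d<e \<longrightarrow> e<M \<longrightarrow> 4 * DD \<psi> a b d e \<le> DD \<psi> b c d e)"
definition "Rm \<longleftrightarrow> (\<forall>a b c d e. a<b \<longrightarrow> b<c \<longrightarrow> c<d \<longrightarrow> d<e \<longrightarrow> e<M \<longrightarrow> 4 * DD \<psi> b c d e \<le> DD \<psi> a b d e)"
definition "Cp \<longleftrightarrow> (\<forall>a b c d e. a<b \<longrightarrow> b<c \<longrightarrow> c<d \<longrightarrow> d<e \<longrightarrow> e<M \<longrightarrow> 4 * DD \<psi> a b c d \<le> DD \<psi> a b d e)"
definition "Cm \<longleftrightarrow> (\<forall>a b c d e. a<b \<longrightarrow> b<c \<longrightarrow> c<d \<longrightarrow> d<e \<longrightarrow> e<M \<longrightarrow> 4 * DD \<psi> a b d e \<le> DD \<psi> a b c d)"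

lemma RpD: "Rp \<Longrightarrow> a<b \<Longrightarrow> b<c \<Longrightarrow> c<d \<Longrightarrow> d<e \<Longrightarrow> e<M \<Longrightarrow> 4 * DD \<psi> a b d e \<le> DD \<psi> b c d e"
  unfolding Rp_def by blast
lemma RmD: "Rm \<Longrightarrow> a<b \<Longrightarrow> b<c \<Longrightarrow> c<d \<Longrightarrow> d<e \<Longrightarrow> e<M \<Longrightarrow> 4 * DD \<psi> b c d e \<le> DD \<psi> a b d e"
  unfolding Rm_def by blast
lemma CpD: "Cp \<Longrightarrow> a<b \<Longrightarrow> b<c \<Longrightarrow> c<d \<Longrightarrow> d<e \<Longrightarrow> e<M \<Longrightarrow> 4 * DD \<psi> a b c d \<le> DD \<psi> a b d e"
  unfolding Cp_def by blast
lemma CmD: "Cm \<Longrightarrow> a<b \<Longrightarrow> b<c \<Longrightarrow> c<d \<Longrightarrow> d<e \<Longrightarrow> e<M \<Longrightarrow> 4 * DD \<psi> a b d e \<le> DD \<psi> a b c d"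
  unfolding Cm_def by blast

lemma row_dich: "Rp \<or> Rm"
proof (cases "1 * DD \<psi> 0 1 3 4 \<le> 1 * DD \<psi> 1 2 3 4")
  case True
  have t: "\<And>l l'. 0 < l \<Longrightarrow> l < l' \<Longrightarrow> l' < 6 \<Longrightarrow> 1 * DD \<psi> 0 l 6 7 \<le> 1 * DD \<psi> l l' 6 7"
  proof -
    fix l l' :: nat assume l: "0 < l" "l < l'" "l' < 6"
    show "1 * DD \<psi> 0 l 6 7 \<le> 1 * DD \<psi> l l' 6 7"
      using TP_R[OF tp, of 0 1 2 3 4 0 l l' 6 7 1 1] True l M12 R14 by simp
  qed
  have p: "\<And>a b. a < b \<Longrightarrow> b < 6 \<Longrightarrow> 0 < DD \<psi> a b 6 7" using pos M12 by simp
  have d1: "DD \<psi> 0 1 6 7 \<le> DD \<psi> 1 2 6 7" using t[of 1 2] by simp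
  have d2: "DD \<psi> 0 2 6 7 \<le> DD \<psi> 2 3 6 7" using t[of 2 3] by simp
  have d3: "DD \<psi> 0 3 6 7 \<le> DD \<psi> 3 4 6 7" using t[of 3 4] by simp
  have d4: "DD \<psi> 0 4 6 7 \<le> DD \<psi> 4 5 6 7" using t[of 4 5] by simp
  have a2: "DD \<psi> 0 2 6 7 = DD \<psi> 0 1 6 7 + DD \<psi> 1 2 6 7" by (rule DD_row)
  have a3: "DD \<psi> 0 3 6 7 = DD \<psi> 0 1 6 7 + DD \<psi> 1 3 6 7" by (rule DD_row)
  have a4: "DD \<psi> 0 4 6 7 = DD \<psi> 0 1 6 7 + DD \<psi> 1 4 6 7" by (rule DD_row)
  have s: "DD \<psi> 1 5 6 7 = DD \<psi> 1 2 6 7 + DD \<psi> 2 3 6 7 + DD \<psi> 3 4 6 7 + DD \<psi> 4 5 6 7"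
    using DD_row[of \<psi> 1 5 6 7 2] DD_row[of \<psi> 2 5 6 7 3] DD_row[of \<psi> 3 5 6 7 4] by simp
  have q2: "0 < DD \<psi> 1 2 6 7" "0 < DD \<psi> 1 3 6 7" "0 < DD \<psi> 1 4 6 7" using p by auto
  have base: "4 * DD \<psi> 0 1 6 7 \<le> 1 * DD \<psi> 1 5 6 7"
    using d1 d2 d3 d4 a2 a3 a4 s q2 by linarith
  have "Rp" unfolding Rp_def
  proof (intro allI impI)
    fix a b c d e :: nat assume o: "a<b" "b<c" "c<d" "d<e" "e<M"
    have "(4 * DD \<psi> 0 1 6 7 \<le> 1 * DD \<psi> 1 5 6 7) \<longleftrightarrow> (4 * DD \<psi> a b d e \<le> 1 * DD \<psi> b c d e)"
      by (rule TP_R[OF tp _ _ _ _ _ o R14(1) R14(2)]) (use M12 in auto)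
    then show "4 * DD \<psi> a b d e \<le> DD \<psi> b c d e" using base by simp
  qed
  then show ?thesis by simp
next
  case False
  have t: "\<And>l l'. l < l' \<Longrightarrow> l' < 5 \<Longrightarrow> \<not> (1 * DD \<psi> l l' 6 7 \<le> 1 * DD \<psi> l' 5 6 7)"
  proof -
    fix l l' :: nat assume l: "l < l'" "l' < 5"
    show "\<not> (1 * DD \<psi> l l' 6 7 \<le> 1 * DD \<psi> l' 5 6 7)"
      using TP_R[OF tp, of 0 1 2 3 4 l l' 5 6 7 1 1] False l M12 R14 by simp
  qed
  have p: "\<And>a b. a < b \<Longrightarrow> b < 6 \<Longrightarrow> 0 < DD \<psi> a b 6 7" using pos M12 by simp
  have d0: "DD \<psi> 1 5 6 7 < DD \<psi> 0 1 6 7" using t[of 0 1] by simp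
  have d1: "DD \<psi> 2 5 6 7 < DD \<psi> 1 2 6 7" using t[of 1 2] by simp
  have d2: "DD \<psi> 3 5 6 7 < DD \<psi> 2 3 6 7" using t[of 2 3] by simp
  have d3: "DD \<psi> 4 5 6 7 < DD \<psi> 3 4 6 7" using t[of 3 4] by simp
  have a1: "DD \<psi> 1 5 6 7 = DD \<psi> 1 4 6 7 + DD \<psi> 4 5 6 7" by (rule DD_row)
  have a2: "DD \<psi> 2 5 6 7 = DD \<psi> 2 4 6 7 + DD \<psi> 4 5 6 7" by (rule DD_row)
  have a3: "DD \<psi> 3 5 6 7 = DD \<psi> 3 4 6 7 + DD \<psi> 4 5 6 7" by (rule DD_row)
  have s: "DD \<psi> 0 4 6 7 = DD \<psi> 0 1 6 7 + DD \<psi> 1 2 6 7 + DD \<psi> 2 3 6 7 + DD \<psi> 3 4 6 7"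
    using DD_row[of \<psi> 0 4 6 7 1] DD_row[of \<psi> 1 4 6 7 2] DD_row[of \<psi> 2 4 6 7 3] by simp
  have q2: "0 < DD \<psi> 1 4 6 7" "0 < DD \<psi> 2 4 6 7" "0 < DD \<psi> 3 4 6 7" using p by auto
  have base: "4 * DD \<psi> 4 5 6 7 \<le> 1 * DD \<psi> 0 4 6 7"
    using d0 d1 d2 d3 a1 a2 a3 s q2 by linarith
  have "Rm" unfolding Rm_def
  proof (intro allI impI)
    fix a b c d e :: nat assume o: "a<b" "b<c" "c<d" "d<e" "e<M"
    have "(4 * DD \<psi> 4 5 6 7 \<le> 1 * DD \<psi> 0 4 6 7) \<longleftrightarrow> (4 * DD \<psi> b c d e \<le> 1 * DD \<psi> a b d e)"
      by (rule TP_R'[OF tp _ _ _ _ _ o R14(1) R14(2)]) (use M12 in auto)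
    then show "4 * DD \<psi> b c d e \<le> DD \<psi> a b d e" using base by simp
  qed
  then show ?thesis by simp
qed

lemma col_dich: "Cp \<or> Cm"
proof (cases "1 * DD \<psi> 0 1 2 3 \<le> 1 * DD \<psi> 0 1 3 4")
  case True
  have t: "\<And>l l'. 2 < l \<Longrightarrow> l < l' \<Longrightarrow> l' < 8 \<Longrightarrow> 1 * DD \<psi> 0 1 2 l \<le> 1 * DD \<psi> 0 1 l l'"
  proof -
    fix l l' :: nat assume l: "2 < l" "l < l'" "l' < 8"
    show "1 * DD \<psi> 0 1 2 l \<le> 1 * DD \<psi> 0 1 l l'"
      using TP_C[OF tp, of 0 1 2 3 4 0 1 2 l l' 1 1] True l M12 R14 by simp
  qed
  have p: "\<And>a b. 1 < a \<Longrightarrow> a < b \<Longrightarrow> b < 8 \<Longrightarrow> 0 < DD \<psi> 0 1 a b" using pos M12 by simp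
  have d3: "DD \<psi> 0 1 2 3 \<le> DD \<psi> 0 1 3 4" using t[of 3 4] by simp
  have d4: "DD \<psi> 0 1 2 4 \<le> DD \<psi> 0 1 4 5" using t[of 4 5] by simp
  have d5: "DD \<psi> 0 1 2 5 \<le> DD \<psi> 0 1 5 6" using t[of 5 6] by simp
  have d6: "DD \<psi> 0 1 2 6 \<le> DD \<psi> 0 1 6 7" using t[of 6 7] by simp
  have a4: "DD \<psi> 0 1 2 4 = DD \<psi> 0 1 2 3 + DD \<psi> 0 1 3 4" by (rule DD_col)
  have a5: "DD \<psi> 0 1 2 5 = DD \<psi> 0 1 2 3 + DD \<psi> 0 1 3 5" by (rule DD_col)
  have a6: "DD \<psi> 0 1 2 6 = DD \<psi> 0 1 2 3 + DD \<psi> 0 1 3 6" by (rule DD_col)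
  have s: "DD \<psi> 0 1 3 7 = DD \<psi> 0 1 3 4 + DD \<psi> 0 1 4 5 + DD \<psi> 0 1 5 6 + DD \<psi> 0 1 6 7"
    using DD_col[of \<psi> 0 1 3 7 4] DD_col[of \<psi> 0 1 4 7 5] DD_col[of \<psi> 0 1 5 7 6] by simp
  have q: "0 < DD \<psi> 0 1 3 4" "0 < DD \<psi> 0 1 3 5" "0 < DD \<psi> 0 1 3 6" using p by auto
  have base: "4 * DD \<psi> 0 1 2 3 \<le> 1 * DD \<psi> 0 1 3 7"
    using d3 d4 d5 d6 a4 a5 a6 s q by linarith
  have "Cp" unfolding Cp_def
  proof (intro allI impI)
    fix a b c d e :: nat assume o: "a<b" "b<c" "c<d" "d<e" "e<M"
    have "(4 * DD \<psi> 0 1 2 3 \<le> 1 * DD \<psi> 0 1 3 7) \<longleftrightarrow> (4 * DD \<psi> a b c d \<le> 1 * DD \<psi> a b d e)"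
      by (rule TP_C[OF tp _ _ _ _ _ o R14(1) R14(2)]) (use M12 in auto)
    then show "4 * DD \<psi> a b c d \<le> DD \<psi> a b d e" using base by simp
  qed
  then show ?thesis by simp
next
  case False
  have t: "\<And>l l'. 1 < l \<Longrightarrow> l < l' \<Longrightarrow> l' < 7 \<Longrightarrow> \<not> (1 * DD \<psi> 0 1 l l' \<le> 1 * DD \<psi> 0 1 l' 7)"
  proof -
    fix l l' :: nat assume l: "1 < l" "l < l'" "l' < 7"
    show "\<not> (1 * DD \<psi> 0 1 l l' \<le> 1 * DD \<psi> 0 1 l' 7)"
      using TP_C[OF tp, of 0 1 2 3 4 0 1 l l' 7 1 1] False l M12 R14 by simp
  qed
  have p: "\<And>a b. 1 < a \<Longrightarrow> a < b \<Longrightarrow> b < 8 \<Longrightarrow> 0 < DD \<psi> 0 1 a b" using pos M12 by simp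
  have d2: "DD \<psi> 0 1 3 7 < DD \<psi> 0 1 2 3" using t[of 2 3] by simp
  have d3: "DD \<psi> 0 1 4 7 < DD \<psi> 0 1 3 4" using t[of 3 4] by simp
  have d4: "DD \<psi> 0 1 5 7 < DD \<psi> 0 1 4 5" using t[of 4 5] by simp
  have d5: "DD \<psi> 0 1 6 7 < DD \<psi> 0 1 5 6" using t[of 5 6] by simp
  have a3: "DD \<psi> 0 1 3 7 = DD \<psi> 0 1 3 6 + DD \<psi> 0 1 6 7" by (rule DD_col)
  have a4: "DD \<psi> 0 1 4 7 = DD \<psi> 0 1 4 6 + DD \<psi> 0 1 6 7" by (rule DD_col)
  have a5: "DD \<psi> 0 1 5 7 = DD \<psi> 0 1 5 6 + DD \<psi> 0 1 6 7" by (rule DD_col)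
  have s: "DD \<psi> 0 1 2 6 = DD \<psi> 0 1 2 3 + DD \<psi> 0 1 3 4 + DD \<psi> 0 1 4 5 + DD \<psi> 0 1 5 6"
    using DD_col[of \<psi> 0 1 2 6 3] DD_col[of \<psi> 0 1 3 6 4] DD_col[of \<psi> 0 1 4 6 5] by simp
  have q: "0 < DD \<psi> 0 1 3 6" "0 < DD \<psi> 0 1 4 6" "0 < DD \<psi> 0 1 5 6" using p by auto
  have base: "4 * DD \<psi> 0 1 6 7 \<le> 1 * DD \<psi> 0 1 2 6"
    using d2 d3 d4 d5 a3 a4 a5 s q by linarith
  have "Cm" unfolding Cm_def
  proof (intro allI impI)
    fix a b c d e :: nat assume o: "a<b" "b<c" "c<d" "d<e" "e<M"
    have "(4 * DD \<psi> 0 1 6 7 \<le> 1 * DD \<psi> 0 1 2 6) \<longleftrightarrow> (4 * DD \<psi> a b d e \<le> 1 * DD \<psi> a b c d)"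
      by (rule TP_C'[OF tp _ _ _ _ _ o R14(1) R14(2)]) (use M12 in auto)
    then show "4 * DD \<psi> a b d e \<le> DD \<psi> a b c d" using base by simp
  qed
  then show ?thesis by simp
qed

end


lemma move_mono:
  fixes z z' :: nat
  assumes "\<forall>w\<in>U. w \<noteq> z \<longrightarrow> (w < z \<longrightarrow> w < z') \<and> (z < w \<longrightarrow> z' < w)"
  shows "strict_mono_on U (\<lambda>w. if w = z then z' else w)"
proof (rule strict_mono_onI)
  fix r s assume r: "r \<in> U" and s: "s \<in> U" and rs: "r < s"
  show "(if r = z then z' else r) < (if s = z then z' else s)"
  proof (cases "r = z")
    case True
    then have "s \<noteq> z" using rs by auto
    then show ?thesis using assms s rs True by auto
  next
    case False
    then show ?thesis using assms r rs by (cases "s = z") auto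
  qed
qed

lemma sep10: "10 dvd (a::nat) \<Longrightarrow> 10 dvd c \<Longrightarrow> a \<noteq> c \<Longrightarrow> a + 10 \<le> c \<or> c + 10 \<le> a"
  by (auto elim!: dvdE)

lemma EXP:
  assumes "(\<forall>P\<in>B. 0 \<le> F P) \<or> (\<forall>P\<in>B. F P \<le> 0)"
    and "\<forall>P\<in>B. c P \<le> \<bar>F P\<bar> \<and> \<bar>F P\<bar> \<le> 2 * c P"
    and "\<forall>P\<in>B. \<forall>Q\<in>B. P \<noteq> Q \<longrightarrow> 4 * c Q \<le> c P \<or> 4 * c P \<le> c Q"
  shows "exp_separated B F"
  unfolding exp_separated_def
proof (intro conjI ballI impI)
  show "(\<forall>b\<in>B. 0 \<le> F b) \<or> (\<forall>b\<in>B. F b \<le> 0)" using assms(1) by blast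
  fix b b' assume b: "b \<in> B" "b' \<in> B" "b \<noteq> b'"
  have cb: "c b \<le> \<bar>F b\<bar>" "\<bar>F b\<bar> \<le> 2 * c b" "c b' \<le> \<bar>F b'\<bar>" "\<bar>F b'\<bar> \<le> 2 * c b'"
    using assms(2) b by auto
  have "4 * c b' \<le> c b \<or> 4 * c b \<le> c b'" using assms(3) b by blast
  then show "2 * \<bar>F b'\<bar> \<le> \<bar>F b\<bar> \<or> 2 * \<bar>F b\<bar> \<le> \<bar>F b'\<bar>"
    using cb by linarith
qed

definition gm :: "nat \<Rightarrow> nat \<Rightarrow> nat \<Rightarrow> nat" where "gm z z' w = (if w = z then z' else w)"

context posctx
begin

definition "II = (\<lambda>i. 10*i + 10) ` {..<n}"
definition "TT = 10*n + 10"
definition "cx1 a = (if Rp then a - 1 else a)"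
definition "cx2 a = (if Rp then a else a + 1)"
definition "cy1 b = (if Cp then b - 1 else b)"
definition "cy2 b = (if Cp then b else b + 1)"
definition "cv a b = DD \<psi> (cx1 a) (cx2 a) (cy1 b) (cy2 b)"
definition "ma a = (if Rp then a + 2 else a - 2)"
definition "mb b = (if Cp then b + 2 else b - 2)"

lemma card_II: "card II = n"
  unfolding II_def by (subst card_image) (auto simp: inj_on_def)

lemma II_sub: "II \<subseteq> {..<M}" unfolding II_def using Mn by auto

lemma pairsI:
  assumes "(a,b) \<in> pairs2 II"
  shows "10 \<le> a" "a + 10 \<le> b" "b \<le> 10 * n" "10 dvd a" "10 dvd b"
proof -
  obtain i j where ij: "i < n" "j < n" "a = 10*i+10" "b = 10*j+10" "a < b"
    using assms unfolding pairs2_def II_def by auto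
  then show "10 \<le> a" "a + 10 \<le> b" "b \<le> 10 * n" "10 dvd a" "10 dvd b" by auto
qed

lemma RmI: "\<not> Rp \<Longrightarrow> Rm" using row_dich by blast
lemma CmI: "\<not> Cp \<Longrightarrow> Cm" using col_dich by blast

lemma cv_pos: assumes "(a,b) \<in> pairs2 II" shows "0 < cv a b"
proof -
  note p = pairsI[OF assms]
  show ?thesis unfolding cv_def
    by (rule pos) (use p Mn in \<open>auto simp: cx1_def cx2_def cy1_def cy2_def\<close>)
qed

lemma growA:
  assumes P: "(a,b) \<in> pairs2 II"
  shows "21 * cv a b \<le> DD \<psi> (gm a (ma a) (cx1 a)) (gm a (ma a) (cx2 a)) (gm a (ma a) (cy1 b)) (gm a (ma a) (cy2 b))"
proof -
  note p = pairsI[OF P]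
  define y1 where "y1 = cy1 b"
  define y2 where "y2 = cy2 b"
  have y: "a + 2 < y1" "y1 < y2" "y2 < M" unfolding y1_def y2_def cy1_def cy2_def using p Mn by auto
  have gy: "gm a (ma a) y1 = y1" "gm a (ma a) y2 = y2"
    unfolding gm_def using y by auto
  show ?thesis
  proof (cases Rp)
    case True
    have e: "cx1 a = a - 1" "cx2 a = a" "gm a (ma a) (a - 1) = a - 1" "gm a (ma a) a = a + 2"
      unfolding cx1_def cx2_def gm_def ma_def using True p by auto
    have s: "DD \<psi> (a-1) (a+2) y1 y2 = DD \<psi> (a-1) a y1 y2 + DD \<psi> a (a+1) y1 y2 + DD \<psi> (a+1) (a+2) y1 y2"
      using DD_row[of \<psi> "a-1" "a+2" y1 y2 a] DD_row[of \<psi> a "a+2" y1 y2 "a+1"] by simp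
    have r1: "4 * DD \<psi> (a-1) a y1 y2 \<le> DD \<psi> a (a+1) y1 y2"
      using RpD[OF True, of "a-1" a "a+1" y1 y2] y p by simp
    have r2: "4 * DD \<psi> a (a+1) y1 y2 \<le> DD \<psi> (a+1) (a+2) y1 y2"
      using RpD[OF True, of a "a+1" "a+2" y1 y2] y p by simp
    have q: "0 < DD \<psi> (a-1) a y1 y2" using pos[of "a-1" a y1 y2] y p by simp
    show ?thesis unfolding cv_def y1_def[symmetric] y2_def[symmetric] e gy using s r1 r2 q by linarith
  next
    case False
    have Rm: Rm using RmI False by simp
    have e: "cx1 a = a" "cx2 a = a + 1" "gm a (ma a) a = a - 2" "gm a (ma a) (a + 1) = a + 1"
      unfolding cx1_def cx2_def gm_def ma_def using False p by auto
    have s: "DD \<psi> (a-2) (a+1) y1 y2 = DD \<psi> (a-2) (a-1) y1 y2 + DD \<psi> (a-1) a y1 y2 + DD \<psi> a (a+1) y1 y2"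
      using DD_row[of \<psi> "a-2" "a+1" y1 y2 "a-1"] DD_row[of \<psi> "a-1" "a+1" y1 y2 a] by simp
    have r1: "4 * DD \<psi> a (a+1) y1 y2 \<le> DD \<psi> (a-1) a y1 y2"
      using RmD[OF Rm, of "a-1" a "a+1" y1 y2] y p by simp
    have r2: "4 * DD \<psi> (a-1) a y1 y2 \<le> DD \<psi> (a-2) (a-1) y1 y2"
      using RmD[OF Rm, of "a-2" "a-1" a y1 y2] y p by (simp add: numeral_2_eq_2)
    have q: "0 < DD \<psi> a (a+1) y1 y2" using pos[of a "a+1" y1 y2] y p by simp
    show ?thesis unfolding cv_def y1_def[symmetric] y2_def[symmetric] e gy using s r1 r2 q by linarith
  qed
qed

lemma growB:
  assumes P: "(a,b) \<in> pairs2 II"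
  shows "21 * cv a b \<le> DD \<psi> (gm b (mb b) (cx1 a)) (gm b (mb b) (cx2 a)) (gm b (mb b) (cy1 b)) (gm b (mb b) (cy2 b))"
proof -
  note p = pairsI[OF P]
  define x1 where "x1 = cx1 a"
  define x2 where "x2 = cx2 a"
  have x: "x1 < x2" "x2 + 2 < b" unfolding x1_def x2_def cx1_def cx2_def using p by auto
  have gx: "gm b (mb b) x1 = x1" "gm b (mb b) x2 = x2"
    unfolding gm_def using x by auto
  have bM: "b + 2 < M" using p Mn by simp
  show ?thesis
  proof (cases Cp)
    case True
    have e: "cy1 b = b - 1" "cy2 b = b" "gm b (mb b) (b - 1) = b - 1" "gm b (mb b) b = b + 2"
      unfolding cy1_def cy2_def gm_def mb_def using True p by auto
    have s: "DD \<psi> x1 x2 (b-1) (b+2) = DD \<psi> x1 x2 (b-1) b + DD \<psi> x1 x2 b (b+1) + DD \<psi> x1 x2 (b+1) (b+2)"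
      using DD_col[of \<psi> x1 x2 "b-1" "b+2" b] DD_col[of \<psi> x1 x2 b "b+2" "b+1"] by simp
    have r1: "4 * DD \<psi> x1 x2 (b-1) b \<le> DD \<psi> x1 x2 b (b+1)"
      using CpD[OF True, of x1 x2 "b-1" b "b+1"] x p bM by simp
    have r2: "4 * DD \<psi> x1 x2 b (b+1) \<le> DD \<psi> x1 x2 (b+1) (b+2)"
      using CpD[OF True, of x1 x2 b "b+1" "b+2"] x p bM by simp
    have q: "0 < DD \<psi> x1 x2 (b-1) b" using pos[of x1 x2 "b-1" b] x p bM by simp
    show ?thesis unfolding cv_def x1_def[symmetric] x2_def[symmetric] e gx using s r1 r2 q by linarith
  next
    case False
    have Cm: Cm using CmI False by simp
    have e: "cy1 b = b" "cy2 b = b + 1" "gm b (mb b) b = b - 2" "gm b (mb b) (b + 1) = b + 1"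
      unfolding cy1_def cy2_def gm_def mb_def using False p by auto
    have s: "DD \<psi> x1 x2 (b-2) (b+1) = DD \<psi> x1 x2 (b-2) (b-1) + DD \<psi> x1 x2 (b-1) b + DD \<psi> x1 x2 b (b+1)"
      using DD_col[of \<psi> x1 x2 "b-2" "b+1" "b-1"] DD_col[of \<psi> x1 x2 "b-1" "b+1" b] by simp
    have r1: "4 * DD \<psi> x1 x2 b (b+1) \<le> DD \<psi> x1 x2 (b-1) b"
      using CmD[OF Cm, of x1 x2 "b-1" b "b+1"] x p bM by simp
    have r2: "4 * DD \<psi> x1 x2 (b-1) b \<le> DD \<psi> x1 x2 (b-2) (b-1)"
      using CmD[OF Cm, of x1 x2 "b-2" "b-1" b] x p bM by (simp add: numeral_2_eq_2)
    have q: "0 < DD \<psi> x1 x2 b (b+1)" using pos[of x1 x2 b "b+1"] x p bM by simp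
    show ?thesis unfolding cv_def x1_def[symmetric] x2_def[symmetric] e gx using s r1 r2 q by linarith
  qed
qed

end


fun Bf :: "(nat \<times> nat \<Rightarrow> real) \<Rightarrow> nat \<Rightarrow> real" where
  "Bf \<psi> 0 = 0"
| "Bf \<psi> (Suc j) = Bf \<psi> j + (\<psi> (j - 1, j + 1) - \<psi> (j - 1, j))"

definition Tri :: "(nat \<times> nat \<Rightarrow> real) \<Rightarrow> nat \<Rightarrow> nat \<Rightarrow> real" where
  "Tri \<psi> a b = \<psi> (a, a+1) - Bf \<psi> (a+1) + Bf \<psi> b - \<psi> (a, b)"

lemma Tri_1: "Tri \<psi> a (a+1) = 0" unfolding Tri_def by simp
lemma Tri_2: "Tri \<psi> a (a+2) = 0"
proof -
  have "Bf \<psi> (a+2) = Bf \<psi> (a+1) + (\<psi> (a, a+2) - \<psi> (a, a+1))"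
    using Bf.simps(2)[of \<psi> "a+1"] by (simp add: numeral_2_eq_2)
  then show ?thesis unfolding Tri_def by simp
qed
lemma Tri_rec: "Tri \<psi> a b = DD \<psi> a (a+1) (b-1) b + Tri \<psi> (a+1) b + Tri \<psi> a (b-1) - Tri \<psi> (a+1) (b-1)"
  unfolding Tri_def DD_def by simp

context posctx
begin

lemma E_nonneg: "a + 2 \<le> b \<Longrightarrow> b < M \<Longrightarrow> 0 \<le> Tri \<psi> a b - Tri \<psi> (a+1) b"
proof (induction b rule: nat_induct_at_least)
  case base
  have "Tri \<psi> (a+1) (a+2) = 0" using Tri_1[of \<psi> "a+1"] by simp
  then show ?case using Tri_2[of \<psi> a] by simp
next
  case (Suc b)
  have r: "Tri \<psi> a (Suc b) = DD \<psi> a (a+1) b (Suc b) + Tri \<psi> (a+1) (Suc b) + Tri \<psi> a b - Tri \<psi> (a+1) b"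
    using Tri_rec[of \<psi> a "Suc b"] by simp
  have "0 < DD \<psi> a (a+1) b (Suc b)" using pos[of a "a+1" b "Suc b"] Suc by simp
  then show ?case using r Suc by simp
qed

lemma Tri_nonneg_aux: "\<forall>a. a + d = b \<longrightarrow> 0 < d \<longrightarrow> b < M \<longrightarrow> 0 \<le> Tri \<psi> a b"
proof (induction d)
  case 0 then show ?case by simp
next
  case (Suc d)
  show ?case
  proof (intro allI impI)
    fix a assume a: "a + Suc d = b" "b < M"
    show "0 \<le> Tri \<psi> a b"
    proof (cases "d \<le> 1")
      case True
      then have "b = a + 1 \<or> b = a + 2" using a by auto
      then show ?thesis using Tri_1[of \<psi> a] Tri_2[of \<psi> a] by auto
    next
      case False
      have "0 \<le> Tri \<psi> a b - Tri \<psi> (a+1) b" using E_nonneg[of a b] a False by simp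
      moreover have "0 \<le> Tri \<psi> (a+1) b" using Suc.IH a False by simp
      ultimately show ?thesis by simp
    qed
  qed
qed

lemma Tri_nonneg: "a < b \<Longrightarrow> b < M \<Longrightarrow> 0 \<le> Tri \<psi> a b"
  using Tri_nonneg_aux[of "b - a" b] by simp

lemma Tri_ge: "a + 3 \<le> b \<Longrightarrow> b < M \<Longrightarrow> DD \<psi> a (a+1) (b-1) b \<le> Tri \<psi> a b"
proof -
  assume ab: "a + 3 \<le> b" "b < M"
  have "0 \<le> Tri \<psi> (a+1) b" using Tri_nonneg[of "a+1" b] ab by simp
  moreover have "0 \<le> Tri \<psi> a (b-1) - Tri \<psi> (a+1) (b-1)" using E_nonneg[of a "b-1"] ab by simp
  ultimately show ?thesis using Tri_rec[of \<psi> a b] by simp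
qed

lemma Tri_le_aux:
  assumes Rm: Rm and Cp: Cp
  shows "\<forall>a b. a + d = b \<longrightarrow> 3 \<le> d \<longrightarrow> b < M \<longrightarrow> Tri \<psi> a b \<le> 2 * DD \<psi> a (a+1) (b-1) b"
proof (induction d rule: less_induct)
  case (less d)
  show ?case
  proof (intro allI impI)
    fix a b assume ab: "a + d = b" "3 \<le> d" "b < M"
    have c0: "0 < DD \<psi> a (a+1) (b-1) b" using pos[of a "a+1" "b-1" b] ab by simp
    have t0: "0 \<le> Tri \<psi> (a+1) (b-1)" using Tri_nonneg[of "a+1" "b-1"] ab by simp
    have rec: "Tri \<psi> a b = DD \<psi> a (a+1) (b-1) b + Tri \<psi> (a+1) b + Tri \<psi> a (b-1) - Tri \<psi> (a+1) (b-1)"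
      by (rule Tri_rec)
    show "Tri \<psi> a b \<le> 2 * DD \<psi> a (a+1) (b-1) b"
    proof (cases "d = 3")
      case True
      have bb: "a+1+2 = b" using ab True by linarith
      have "Tri \<psi> (a+1) b = 0" using Tri_2[of \<psi> "a+1"] unfolding bb .
      moreover have "Tri \<psi> a (b-1) = 0"
      proof -
        have bb2: "a+2 = b-1" using ab True by linarith
        show ?thesis using Tri_2[of \<psi> a] unfolding bb2 .
      qed
      ultimately show ?thesis using rec t0 c0 by simp
    next
      case False
      have dl: "d - 1 < d" "a + 1 + (d - 1) = b" "3 \<le> d - 1" "a + (d - 1) = b - 1" "b - 1 < M"
        using ab False by auto
      have i1: "Tri \<psi> (a+1) b \<le> 2 * DD \<psi> (a+1) (a+1+1) (b-1) b"
        using less.IH[OF dl(1), rule_format, OF dl(2) dl(3) ab(3)] .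
      have i2: "Tri \<psi> a (b-1) \<le> 2 * DD \<psi> a (a+1) (b-1-1) (b-1)"
        using less.IH[OF dl(1), rule_format, OF dl(4) dl(3) dl(5)] .
      have r1: "4 * DD \<psi> (a+1) (a+1+1) (b-1) b \<le> DD \<psi> a (a+1) (b-1) b"
        by (rule RmD[OF Rm]) (use ab False in auto)
      have r2: "4 * DD \<psi> a (a+1) (b-1-1) (b-1) \<le> DD \<psi> a (a+1) (b-1) b"
        by (rule CpD[OF Cp]) (use ab False in auto)
      show ?thesis using rec t0 i1 i2 r1 r2 by linarith
    qed
  qed
qed

lemma Tri_le:
  assumes "Rm" "Cp" "a + 3 \<le> b" "b < M" shows "Tri \<psi> a b \<le> 2 * DD \<psi> a (a+1) (b-1) b"
proof -
  have "a + (b - a) = b" "3 \<le> b - a" using assms by auto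
  then show ?thesis using Tri_le_aux[OF assms(1,2), of "b-a"] assms(4) by blast
qed

end


context posctx
begin

lemma sepA:
  assumes P: "(a,b) \<in> pairs2 II" and Q: "(a',b') \<in> pairs2 II" and na: "a \<noteq> a'" "a \<noteq> b'"
  shows "4 * cv a' b' \<le> cv a b \<or> 4 * cv a b \<le> cv a' b'"
proof (rule ccontr)
  assume H: "\<not> ?thesis"
  note p = pairsI[OF P] and q = pairsI[OF Q]
  have d1: "a + 10 \<le> a' \<or> a' + 10 \<le> a" using sep10 p(4) q(4) na(1) by blast
  have d2: "a + 10 \<le> b' \<or> b' + 10 \<le> a" using sep10 p(4) q(5) na(2) by blast
  define g where "g = gm a (ma a)"
  define U where "U = set [cx1 a, cx2 a, cy1 b, cy2 b, cx1 a', cx2 a', cy1 b', cy2 b']"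
  have fU: "finite U" unfolding U_def by simp
  have cU: "card U \<le> 8" unfolding U_def using card_length[of "[cx1 a, cx2 a, cy1 b, cy2 b, cx1 a', cx2 a', cy1 b', cy2 b']"] by simp
  have UM: "U \<subseteq> {..<M}" unfolding U_def cx1_def cx2_def cy1_def cy2_def using p q Mn by auto
  have gUM: "g ` U \<subseteq> {..<M}" unfolding U_def g_def gm_def ma_def cx1_def cx2_def cy1_def cy2_def
    using p q Mn by auto
  have cond: "\<forall>w\<in>U. w \<noteq> a \<longrightarrow> (w < a \<longrightarrow> w < ma a) \<and> (a < w \<longrightarrow> ma a < w)"
    unfolding U_def using p q d1 d2 by (auto simp: cx1_def cx2_def cy1_def cy2_def ma_def)
  have sm: "strict_mono_on U g" unfolding g_def gm_def by (rule move_mono[OF cond])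
  have gQ: "g (cx1 a') = cx1 a'" "g (cx2 a') = cx2 a'" "g (cy1 b') = cy1 b'" "g (cy2 b') = cy2 b'"
    unfolding g_def gm_def cx1_def cx2_def cy1_def cy2_def using p q d1 d2 by auto
  have T: "(4 * DD \<psi> (cx1 a') (cx2 a') (cy1 b') (cy2 b') \<le> 1 * DD \<psi> (cx1 a) (cx2 a) (cy1 b) (cy2 b)) \<longleftrightarrow>
           (4 * DD \<psi> (g (cx1 a')) (g (cx2 a')) (g (cy1 b')) (g (cy2 b')) \<le> 1 * DD \<psi> (g (cx1 a)) (g (cx2 a)) (g (cy1 b)) (g (cy2 b)))"
    by (rule TP_use[OF tp fU cU UM gUM sm]) (auto simp: U_def R14)
  have G: "21 * cv a b \<le> DD \<psi> (g (cx1 a)) (g (cx2 a)) (g (cy1 b)) (g (cy2 b))"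
    using growA[OF P] unfolding g_def .
  have cp: "0 < cv a b" by (rule cv_pos[OF P])
  from H have h1: "cv a b < 4 * cv a' b'" and h2: "cv a' b' < 4 * cv a b" by auto
  have "DD \<psi> (g (cx1 a)) (g (cx2 a)) (g (cy1 b)) (g (cy2 b)) < 4 * cv a' b'"
    using T h1 gQ unfolding cv_def by auto
  then show False using G h2 cp by linarith
qed

lemma sepB:
  assumes P: "(a,b) \<in> pairs2 II" and Q: "(a',b') \<in> pairs2 II" and nb: "b \<noteq> a'" "b \<noteq> b'"
  shows "4 * cv a' b' \<le> cv a b \<or> 4 * cv a b \<le> cv a' b'"
proof (rule ccontr)
  assume H: "\<not> ?thesis"
  note p = pairsI[OF P] and q = pairsI[OF Q]
  have d1: "b + 10 \<le> a' \<or> a' + 10 \<le> b" using sep10 p(5) q(4) nb(1) by blast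
  have d2: "b + 10 \<le> b' \<or> b' + 10 \<le> b" using sep10 p(5) q(5) nb(2) by blast
  define g where "g = gm b (mb b)"
  define U where "U = set [cx1 a, cx2 a, cy1 b, cy2 b, cx1 a', cx2 a', cy1 b', cy2 b']"
  have fU: "finite U" unfolding U_def by simp
  have cU: "card U \<le> 8" unfolding U_def using card_length[of "[cx1 a, cx2 a, cy1 b, cy2 b, cx1 a', cx2 a', cy1 b', cy2 b']"] by simp
  have UM: "U \<subseteq> {..<M}" unfolding U_def cx1_def cx2_def cy1_def cy2_def using p q Mn by auto
  have gUM: "g ` U \<subseteq> {..<M}" unfolding U_def g_def gm_def mb_def cx1_def cx2_def cy1_def cy2_def
    using p q Mn by auto
  have cond: "\<forall>w\<in>U. w \<noteq> b \<longrightarrow> (w < b \<longrightarrow> w < mb b) \<and> (b < w \<longrightarrow> mb b < w)"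
    unfolding U_def using p q d1 d2 by (auto simp: cx1_def cx2_def cy1_def cy2_def mb_def)
  have sm: "strict_mono_on U g" unfolding g_def gm_def by (rule move_mono[OF cond])
  have gQ: "g (cx1 a') = cx1 a'" "g (cx2 a') = cx2 a'" "g (cy1 b') = cy1 b'" "g (cy2 b') = cy2 b'"
    unfolding g_def gm_def cx1_def cx2_def cy1_def cy2_def using p q d1 d2 by auto
  have T: "(4 * DD \<psi> (cx1 a') (cx2 a') (cy1 b') (cy2 b') \<le> 1 * DD \<psi> (cx1 a) (cx2 a) (cy1 b) (cy2 b)) \<longleftrightarrow>
           (4 * DD \<psi> (g (cx1 a')) (g (cx2 a')) (g (cy1 b')) (g (cy2 b')) \<le> 1 * DD \<psi> (g (cx1 a)) (g (cx2 a)) (g (cy1 b)) (g (cy2 b)))"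
    by (rule TP_use[OF tp fU cU UM gUM sm]) (auto simp: U_def R14)
  have G: "21 * cv a b \<le> DD \<psi> (g (cx1 a)) (g (cx2 a)) (g (cy1 b)) (g (cy2 b))"
    using growB[OF P] unfolding g_def .
  have cp: "0 < cv a b" by (rule cv_pos[OF P])
  from H have h1: "cv a b < 4 * cv a' b'" and h2: "cv a' b' < 4 * cv a b" by auto
  have "DD \<psi> (g (cx1 a)) (g (cx2 a)) (g (cy1 b)) (g (cy2 b)) < 4 * cv a' b'"
    using T h1 gQ unfolding cv_def by auto
  then show False using G h2 cp by linarith
qed

lemma sep:
  assumes P: "(a,b) \<in> pairs2 II" and Q: "(a',b') \<in> pairs2 II" and ne: "(a,b) \<noteq> (a',b')"
  shows "4 * cv a' b' \<le> cv a b \<or> 4 * cv a b \<le> cv a' b'"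
proof (cases "a \<noteq> a' \<and> a \<noteq> b'")
  case True then show ?thesis using sepA[OF P Q] by blast
next
  case False
  have ab: "a < b" "a' < b'" using P Q unfolding pairs2_def by auto
  have "b \<noteq> a' \<and> b \<noteq> b'" using False ab ne by auto
  then show ?thesis using sepB[OF P Q] by blast
qed

end


lemma pack:
  fixes f X c :: "nat \<Rightarrow> nat \<Rightarrow> real"
  assumes b: "\<And>a b. (a,b) \<in> B \<Longrightarrow> c a b \<le> X a b \<and> X a b \<le> 2 * c a b"
    and p: "\<And>a b. (a,b) \<in> B \<Longrightarrow> 0 < c a b"
    and f: "\<And>a b. f a b = s * X a b" and s: "s = 1 \<or> s = -1"
  shows "((\<forall>P\<in>B. 0 \<le> (\<lambda>(i,j). f i j) P) \<or> (\<forall>P\<in>B. (\<lambda>(i,j). f i j) P \<le> 0))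
     \<and> (\<forall>P\<in>B. (\<lambda>(a,b). c a b) P \<le> \<bar>(\<lambda>(i,j). f i j) P\<bar> \<and> \<bar>(\<lambda>(i,j). f i j) P\<bar> \<le> 2 * (\<lambda>(a,b). c a b) P)"
proof -
  have X0: "0 \<le> X a b" if "(a,b) \<in> B" for a b
    using b[OF that] p[OF that] by linarith
  have ab: "\<bar>f a b\<bar> = X a b" if "(a,b) \<in> B" for a b
    using s X0[OF that] unfolding f by auto
  have c1: "(\<forall>P\<in>B. 0 \<le> (\<lambda>(i,j). f i j) P) \<or> (\<forall>P\<in>B. (\<lambda>(i,j). f i j) P \<le> 0)"
    using s
  proof
    assume s1: "s = 1"
    show ?thesis
    proof (rule disjI1, intro ballI)
      fix P assume "P \<in> B"
      then obtain a b where "P = (a,b)" "(a,b) \<in> B" by (cases P) auto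
      then show "0 \<le> (\<lambda>(i,j). f i j) P" using X0 f s1 by simp
    qed
  next
    assume s1: "s = -1"
    show ?thesis
    proof (rule disjI2, intro ballI)
      fix P assume "P \<in> B"
      then obtain a b where "P = (a,b)" "(a,b) \<in> B" by (cases P) auto
      then show "(\<lambda>(i,j). f i j) P \<le> 0" using X0 f s1 by simp
    qed
  qed
  have c2: "\<forall>P\<in>B. (\<lambda>(a,b). c a b) P \<le> \<bar>(\<lambda>(i,j). f i j) P\<bar> \<and> \<bar>(\<lambda>(i,j). f i j) P\<bar> \<le> 2 * (\<lambda>(a,b). c a b) P"
  proof (intro ballI)
    fix P assume "P \<in> B"
    then obtain a b where "P = (a,b)" "(a,b) \<in> B" by (cases P) auto
    then show "(\<lambda>(a,b). c a b) P \<le> \<bar>(\<lambda>(i,j). f i j) P\<bar> \<and> \<bar>(\<lambda>(i,j). f i j) P\<bar> \<le> 2 * (\<lambda>(a,b). c a b) P"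
      using ab b by simp
  qed
  show ?thesis using c1 c2 by blast
qed

context posctx
begin

lemma LL_bound:
  assumes Rp: Rp and Cp: Cp and P: "(a,b) \<in> pairs2 II"
  shows "cv a b \<le> DD \<psi> 0 a (a+1) b \<and> DD \<psi> 0 a (a+1) b \<le> 2 * cv a b"
proof -
  note p = pairsI[OF P]
  have e: "cv a b = DD \<psi> (a-1) a (b-1) b" unfolding cv_def cx1_def cx2_def cy1_def cy2_def using Rp Cp by simp
  have s1: "DD \<psi> 0 a (a+1) b = DD \<psi> 0 (a-1) (a+1) b + DD \<psi> (a-1) a (a+1) b" by (rule DD_row)
  have s2: "DD \<psi> (a-1) a (a+1) b = DD \<psi> (a-1) a (a+1) (b-1) + DD \<psi> (a-1) a (b-1) b" by (rule DD_col)
  have r1: "4 * DD \<psi> 0 (a-1) (a+1) b \<le> DD \<psi> (a-1) a (a+1) b"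
    by (rule RpD[OF Rp]) (use p Mn in auto)
  have r2: "4 * DD \<psi> (a-1) a (a+1) (b-1) \<le> DD \<psi> (a-1) a (b-1) b"
    by (rule CpD[OF Cp]) (use p Mn in auto)
  have q1: "0 < DD \<psi> 0 (a-1) (a+1) b" by (rule pos) (use p Mn in auto)
  have q2: "0 < DD \<psi> (a-1) a (a+1) (b-1)" by (rule pos) (use p Mn in auto)
  show ?thesis unfolding e using s1 s2 r1 r2 q1 q2 by linarith
qed

lemma RR_bound:
  assumes Rm: Rm and Cm: Cm and nRp: "\<not> Rp" and nCp: "\<not> Cp" and P: "(a,b) \<in> pairs2 II"
  shows "cv a b \<le> DD \<psi> a (b-1) b TT \<and> DD \<psi> a (b-1) b TT \<le> 2 * cv a b"
proof -
  note p = pairsI[OF P]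
  have TT: "b + 1 < TT" "TT < M" unfolding TT_def using p Mn by auto
  have e: "cv a b = DD \<psi> a (a+1) b (b+1)" unfolding cv_def cx1_def cx2_def cy1_def cy2_def using nRp nCp by simp
  have s1: "DD \<psi> a (b-1) b TT = DD \<psi> a (a+1) b TT + DD \<psi> (a+1) (b-1) b TT" by (rule DD_row)
  have s2: "DD \<psi> a (a+1) b TT = DD \<psi> a (a+1) b (b+1) + DD \<psi> a (a+1) (b+1) TT" by (rule DD_col)
  have r1: "4 * DD \<psi> (a+1) (b-1) b TT \<le> DD \<psi> a (a+1) b TT"
    by (rule RmD[OF Rm]) (use p TT in auto)
  have r2: "4 * DD \<psi> a (a+1) (b+1) TT \<le> DD \<psi> a (a+1) b (b+1)"
    by (rule CmD[OF Cm]) (use p TT in auto)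
  have q1: "0 < DD \<psi> (a+1) (b-1) b TT" by (rule pos) (use p TT in auto)
  have q2: "0 < DD \<psi> a (a+1) (b+1) TT" by (rule pos) (use p TT in auto)
  show ?thesis unfolding e using s1 s2 r1 r2 q1 q2 by linarith
qed

lemma LR_bound:
  assumes Rp: Rp and Cm: Cm and nCp: "\<not> Cp" and P: "(a,b) \<in> pairs2 II"
  shows "cv a b \<le> DD \<psi> 0 a b TT \<and> DD \<psi> 0 a b TT \<le> 2 * cv a b"
proof -
  note p = pairsI[OF P]
  have TT: "b + 1 < TT" "TT < M" unfolding TT_def using p Mn by auto
  have e: "cv a b = DD \<psi> (a-1) a b (b+1)" unfolding cv_def cx1_def cx2_def cy1_def cy2_def using Rp nCp by simp
  have s1: "DD \<psi> 0 a b TT = DD \<psi> 0 (a-1) b TT + DD \<psi> (a-1) a b TT" by (rule DD_row)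
  have s2: "DD \<psi> (a-1) a b TT = DD \<psi> (a-1) a b (b+1) + DD \<psi> (a-1) a (b+1) TT" by (rule DD_col)
  have r1: "4 * DD \<psi> 0 (a-1) b TT \<le> DD \<psi> (a-1) a b TT"
    by (rule RpD[OF Rp]) (use p TT in auto)
  have r2: "4 * DD \<psi> (a-1) a (b+1) TT \<le> DD \<psi> (a-1) a b (b+1)"
    by (rule CmD[OF Cm]) (use p TT in auto)
  have q1: "0 < DD \<psi> 0 (a-1) b TT" by (rule pos) (use p TT in auto)
  have q2: "0 < DD \<psi> (a-1) a (b+1) TT" by (rule pos) (use p TT in auto)
  show ?thesis unfolding e using s1 s2 r1 r2 q1 q2 by linarith
qed

lemma RL_bound:
  assumes Rm: Rm and Cp: Cp and nRp: "\<not> Rp" and P: "(a,b) \<in> pairs2 II"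
  shows "cv a b \<le> Tri \<psi> a b \<and> Tri \<psi> a b \<le> 2 * cv a b"
proof -
  note p = pairsI[OF P]
  have e: "cv a b = DD \<psi> a (a+1) (b-1) b" unfolding cv_def cx1_def cx2_def cy1_def cy2_def using nRp Cp by simp
  have bM: "b < M" using p Mn by simp
  show ?thesis unfolding e using Tri_ge[of a b] Tri_le[OF Rm Cp, of a b] p bM by simp
qed

lemma types:
  "\<exists>\<rho>1 \<rho>2. ((\<forall>P\<in>pairs2 II. 0 \<le> (\<lambda>(i,j). \<psi> (i,j) - \<rho>1 i - \<rho>2 j) P) \<or> (\<forall>P\<in>pairs2 II. (\<lambda>(i,j). \<psi> (i,j) - \<rho>1 i - \<rho>2 j) P \<le> 0))
     \<and> (\<forall>P\<in>pairs2 II. (\<lambda>(a,b). cv a b) P \<le> \<bar>(\<lambda>(i,j). \<psi> (i,j) - \<rho>1 i - \<rho>2 j) P\<bar>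
          \<and> \<bar>(\<lambda>(i,j). \<psi> (i,j) - \<rho>1 i - \<rho>2 j) P\<bar> \<le> 2 * (\<lambda>(a,b). cv a b) P)"
proof (cases Rp)
  case True
  note Rp = True
  show ?thesis
  proof (cases Cp)
    case True
    define r1 where "r1 = (\<lambda>a. \<psi> (a, a+1) - \<psi> (0, a+1))"
    define r2 where "r2 = (\<lambda>b. \<psi> (0, b))"
    have F: "\<And>a b. \<psi> (a,b) - r1 a - r2 b = DD \<psi> 0 a (a+1) b" unfolding r1_def r2_def DD_def by simp
    show ?thesis
      apply (rule exI[of _ r1], rule exI[of _ r2])
      using pack[of "pairs2 II" cv "\<lambda>a b. DD \<psi> 0 a (a+1) b" "\<lambda>i j. \<psi> (i,j) - r1 i - r2 j" 1]
        LL_bound[OF Rp True] cv_pos F by simp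
  next
    case False
    have Cm: Cm using CmI False by simp
    define r1 where "r1 = (\<lambda>a. \<psi> (a, TT))"
    define r2 where "r2 = (\<lambda>b. \<psi> (0, b) - \<psi> (0, TT))"
    have F: "\<And>a b. \<psi> (a,b) - r1 a - r2 b = - DD \<psi> 0 a b TT" unfolding r1_def r2_def DD_def by simp
    show ?thesis
      apply (rule exI[of _ r1], rule exI[of _ r2])
      using pack[of "pairs2 II" cv "\<lambda>a b. DD \<psi> 0 a b TT" "\<lambda>i j. \<psi> (i,j) - r1 i - r2 j" "-1"]
        LR_bound[OF Rp Cm False] cv_pos F by simp
  qed
next
  case False
  note nRp = False
  have Rm: Rm using RmI False by simp
  show ?thesis
  proof (cases Cp)
    case True
    define r1 where "r1 = (\<lambda>a. \<psi> (a, a+1) - Bf \<psi> (a+1))"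
    define r2 where "r2 = (\<lambda>b. Bf \<psi> b)"
    have F: "\<And>a b. \<psi> (a,b) - r1 a - r2 b = - Tri \<psi> a b" unfolding r1_def r2_def Tri_def by simp
    show ?thesis
      apply (rule exI[of _ r1], rule exI[of _ r2])
      using pack[of "pairs2 II" cv "\<lambda>a b. Tri \<psi> a b" "\<lambda>i j. \<psi> (i,j) - r1 i - r2 j" "-1"]
        RL_bound[OF Rm True nRp] cv_pos F by simp
  next
    case False
    have Cm: Cm using CmI False by simp
    define r1 where "r1 = (\<lambda>a. \<psi> (a, TT))"
    define r2 where "r2 = (\<lambda>b. \<psi> (b-1, b) - \<psi> (b-1, TT))"
    have F: "\<And>a b. \<psi> (a,b) - r1 a - r2 b = DD \<psi> a (b-1) b TT" unfolding r1_def r2_def DD_def by simp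
    show ?thesis
      apply (rule exI[of _ r1], rule exI[of _ r2])
      using pack[of "pairs2 II" cv "\<lambda>a b. DD \<psi> a (b-1) b TT" "\<lambda>i j. \<psi> (i,j) - r1 i - r2 j" 1]
        RR_bound[OF Rm Cm nRp False] cv_pos F by simp
  qed
qed

lemma main_pos: "\<exists>\<rho>1 \<rho>2. exp_separated (pairs2 II) (\<lambda>(i,j). \<psi> (i,j) - \<rho>1 i - \<rho>2 j)"
proof -
  obtain \<rho>1 \<rho>2 where t:
    "(\<forall>P\<in>pairs2 II. 0 \<le> (\<lambda>(i,j). \<psi> (i,j) - \<rho>1 i - \<rho>2 j) P) \<or> (\<forall>P\<in>pairs2 II. (\<lambda>(i,j). \<psi> (i,j) - \<rho>1 i - \<rho>2 j) P \<le> 0)"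
    "\<forall>P\<in>pairs2 II. (\<lambda>(a,b). cv a b) P \<le> \<bar>(\<lambda>(i,j). \<psi> (i,j) - \<rho>1 i - \<rho>2 j) P\<bar>
          \<and> \<bar>(\<lambda>(i,j). \<psi> (i,j) - \<rho>1 i - \<rho>2 j) P\<bar> \<le> 2 * (\<lambda>(a,b). cv a b) P"
    using types by blast
  have s: "\<forall>P\<in>pairs2 II. \<forall>Q\<in>pairs2 II. P \<noteq> Q \<longrightarrow> 4 * (\<lambda>(a,b). cv a b) Q \<le> (\<lambda>(a,b). cv a b) P \<or> 4 * (\<lambda>(a,b). cv a b) P \<le> (\<lambda>(a,b). cv a b) Q"
    using sep by auto
  show ?thesis using EXP[OF t s] by blast
qed

end


context posctx
begin
lemma main_ex: "\<exists>I. I \<subseteq> {..<M} \<and> card I = n \<and> (\<exists>\<rho>1 \<rho>2. exp_separated (pairs2 I) (\<lambda>(i,j). \<psi> (i,j) - \<rho>1 i - \<rho>2 j))"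
  using II_sub card_II main_pos by blast
end

lemma exp_neg: "exp_separated B F \<Longrightarrow> exp_separated B (\<lambda>x. - F x)"
  unfolding exp_separated_def by auto

lemma exp_zero: "\<forall>x\<in>B. F x = 0 \<Longrightarrow> exp_separated B F"
  unfolding exp_separated_def by auto

lemma main_idx:
  assumes tp: "TP \<psi> M" and Mn: "10*n + 12 \<le> M"
  shows "\<exists>I. I \<subseteq> {..<M} \<and> card I = n \<and> (\<exists>\<rho>1 \<rho>2. exp_separated (pairs2 I) (\<lambda>(i,j). \<psi> (i,j) - \<rho>1 i - \<rho>2 j))"
proof (cases "0 < DD \<psi> 0 1 2 3")
  case True
  interpret posctx \<psi> M n using tp True Mn by unfold_locales
  show ?thesis by (rule main_ex)
next
  case False
  show ?thesis
  proof (cases "DD \<psi> 0 1 2 3 < 0")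
    case True
    have tp': "TP (\<lambda>p. - \<psi> p) M" by (rule TP_neg[OF tp])
    have p': "0 < DD (\<lambda>p. - \<psi> p) 0 1 2 3" using True unfolding DD_def by simp
    interpret posctx "\<lambda>p. - \<psi> p" M n using tp' p' Mn by unfold_locales
    obtain I \<rho>1 \<rho>2 where I: "I \<subseteq> {..<M}" "card I = n"
      and e: "exp_separated (pairs2 I) (\<lambda>(i,j). - \<psi> (i,j) - \<rho>1 i - \<rho>2 j)"
      using main_ex by blast
    have eq: "(\<lambda>(i,j). \<psi> (i,j) - (- \<rho>1 i) - (- \<rho>2 j)) = (\<lambda>x. - (\<lambda>(i,j). - \<psi> (i,j) - \<rho>1 i - \<rho>2 j) x)"
      by (auto simp: fun_eq_iff)
    have ex: "exp_separated (pairs2 I) (\<lambda>(i,j). \<psi> (i,j) - (- \<rho>1 i) - (- \<rho>2 j))"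
      unfolding eq by (rule exp_neg[OF e])
    show ?thesis
    proof (intro exI conjI)
      show "I \<subseteq> {..<M}" "card I = n" using I by auto
      show "exp_separated (pairs2 I) (\<lambda>(i,j). \<psi> (i,j) - (\<lambda>i. - \<rho>1 i) i - (\<lambda>j. - \<rho>2 j) j)"
        using ex by simp
    qed
  next
    case False
    then have z: "DD \<psi> 0 1 2 3 = 0" using \<open>\<not> 0 < DD \<psi> 0 1 2 3\<close> by simp
    have M12: "12 \<le> M" using Mn by simp
    have zero: "DD \<psi> x1 x2 x3 x4 = 0" if o: "x1 < x2" "x2 < x3" "x3 < x4" "x4 < M" for x1 x2 x3 x4
    proof -
      have a: "(1 * DD \<psi> 0 1 2 3 \<le> 0 * DD \<psi> 0 1 2 3) \<longleftrightarrow> (1 * DD \<psi> x1 x2 x3 x4 \<le> 0 * DD \<psi> x1 x2 x3 x4)"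
        by (rule TP4[OF tp _ _ _ _ o R14(3) R14(1)]) (use M12 in auto)
      have b: "(0 * DD \<psi> 0 1 2 3 \<le> 1 * DD \<psi> 0 1 2 3) \<longleftrightarrow> (0 * DD \<psi> x1 x2 x3 x4 \<le> 1 * DD \<psi> x1 x2 x3 x4)"
        by (rule TP4[OF tp _ _ _ _ o R14(1) R14(3)]) (use M12 in auto)
      show ?thesis using a b z by simp
    qed
    define I where "I = (\<lambda>i. 10*i + 10) ` {..<n}"
    define T where "T = 10*n + 10"
    have cI: "card I = n" unfolding I_def by (subst card_image) (auto simp: inj_on_def)
    have IM: "I \<subseteq> {..<M}" unfolding I_def using Mn by auto
    define r1 where "r1 = (\<lambda>a. \<psi> (a, T))"
    define r2 where "r2 = (\<lambda>b. \<psi> (0, b) - \<psi> (0, T))"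
    have F: "\<And>a b. \<psi> (a,b) - r1 a - r2 b = - DD \<psi> 0 a b T" unfolding r1_def r2_def DD_def by simp
    have "\<forall>x\<in>pairs2 I. (\<lambda>(i,j). \<psi> (i,j) - r1 i - r2 j) x = 0"
    proof
      fix x assume x: "x \<in> pairs2 I"
      then obtain a b where ab: "x = (a,b)" "a \<in> I" "b \<in> I" "a < b" unfolding pairs2_def by auto
      have "0 < a" "b < T" "T < M" using ab Mn unfolding I_def T_def by auto
      then have "DD \<psi> 0 a b T = 0" using zero ab by simp
      then show "(\<lambda>(i,j). \<psi> (i,j) - r1 i - r2 j) x = 0" using ab F by simp
    qed
    then have "exp_separated (pairs2 I) (\<lambda>(i,j). \<psi> (i,j) - r1 i - r2 j)" by (rule exp_zero)
    then show ?thesis using cI IM by blast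
  qed
qed


lemma two_c_le: "2 * (c::nat) \<le> 2 ^ (2 * c)"
proof -
  have "2 * c < 2 ^ (2 * c)" by (rule less_exp)
  then show ?thesis by simp
qed

lemma RB_step_pow:
  assumes c1: "1 \<le> (c::nat)" and L1: "1 \<le> L"
  shows "(c ^ (L ^ k) + 1) ^ L \<le> 2 ^ (2 * c * L ^ (Suc k))"
proof -
  have p1: "1 \<le> L ^ k" using L1 by simp
  have "c ^ (L ^ k) + 1 \<le> 2 * c ^ (L ^ k)" using c1 by simp
  also have "\<dots> \<le> 2 ^ (L ^ k) * c ^ (L ^ k)"
  proof -
    have "(2::nat) ^ 1 \<le> 2 ^ (L ^ k)" using p1 by (intro power_increasing) auto
    then show ?thesis by (simp add: mult_right_mono)
  qed
  also have "\<dots> = (2 * c) ^ (L ^ k)" by (simp add: power_mult_distrib)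
  also have "\<dots> \<le> (2 ^ (2 * c)) ^ (L ^ k)" using two_c_le by (intro power_mono) auto
  also have "\<dots> = 2 ^ (2 * c * L ^ k)" by (simp add: power_mult)
  finally have a: "c ^ (L ^ k) + 1 \<le> 2 ^ (2 * c * L ^ k)" .
  have "(c ^ (L ^ k) + 1) ^ L \<le> (2 ^ (2 * c * L ^ k)) ^ L" using a by (rule power_mono) simp
  also have "\<dots> = 2 ^ (2 * c * L ^ Suc k)" by (simp add: power_mult[symmetric] mult.commute mult.left_commute)
  finally show ?thesis .
qed

lemma RB_bound:
  assumes c1: "1 \<le> c"
  shows "\<exists>B\<ge>1. \<forall>m\<ge>1. RB c (Suc k) m \<le> tn k (B * m)"
proof (induction k)
  case 0
  show ?case by (rule exI[of _ c]) (use c1 in auto)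
next
  case (Suc k)
  obtain B where B: "1 \<le> B" "\<forall>m\<ge>1. RB c (Suc k) m \<le> tn k (B * m)" using Suc.IH by blast
  define e where "e = 2 * c"
  define B' where "B' = (e + 2 * k + 2) * (B + 1)"
  have B'1: "1 \<le> B'" unfolding B'_def by simp
  show ?case
  proof (intro exI[of _ B'] conjI allI impI)
    show "1 \<le> B'" by (rule B'1)
    fix m :: nat assume m1: "1 \<le> m"
    define y where "y = RB c (Suc k) m"
    define L where "L = y + 1"
    have yb: "y \<le> tn k (B * m)" unfolding y_def using B m1 by simp
    have Bm1: "1 \<le> B * m" using B(1) m1 by simp
    have RBe: "RB c (Suc (Suc k)) m = (c ^ (L ^ k) + 1) ^ L" unfolding L_def y_def by simp
    have s1: "RB c (Suc (Suc k)) m \<le> 2 ^ (e * L ^ Suc k)"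
      unfolding RBe e_def by (rule RB_step_pow[OF c1]) (simp add: L_def)
    have s2: "e * L ^ Suc k \<le> tn k (B' * m)"
    proof (cases k)
      case 0
      have "L \<le> (B + 1) * m" unfolding L_def using yb 0 m1 by (simp add: algebra_simps)
      then have "e * L \<le> e * ((B + 1) * m)" by simp
      also have "\<dots> \<le> B' * m" unfolding B'_def by (simp add: algebra_simps)
      finally show ?thesis using 0 by simp
    next
      case (Suc j)
      define z where "z = tn j (B * m)"
      have z1: "1 \<le> z" unfolding z_def using tn_ge[of "B*m" j] Bm1 by linarith
      have tk: "tn k (B * m) = 2 ^ z" unfolding z_def using Suc by simp
      have "L \<le> 2 ^ z + 1" unfolding L_def using yb tk by simp
      also have "\<dots> \<le> 2 ^ (z + 1)"
      proof -
        have "1 \<le> (2::nat) ^ z" by simp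
        then show ?thesis by simp
      qed
      finally have L: "L \<le> 2 ^ (z + 1)" .
      have "L ^ Suc k \<le> (2 ^ (z + 1)) ^ Suc k" using L by (rule power_mono) simp
      also have "\<dots> = 2 ^ ((z + 1) * Suc k)" by (rule power_mult[symmetric])
      finally have Lk: "L ^ Suc k \<le> 2 ^ ((z + 1) * Suc k)" .
      have "e * L ^ Suc k \<le> 2 ^ e * 2 ^ ((z + 1) * Suc k)"
      proof -
        have "e < 2 ^ e" by (rule less_exp)
        then show ?thesis using Lk by (intro mult_mono) auto
      qed
      also have "\<dots> = 2 ^ (e + (z + 1) * Suc k)" by (simp add: power_add)
      also have "\<dots> \<le> 2 ^ ((e + 2 * k + 2) * z)"
      proof (rule power_increasing)
        have "e + (z + 1) * Suc k = e + z * Suc k + Suc k" by (simp add: algebra_simps)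
        also have "\<dots> \<le> e * z + z * Suc k + z * Suc k"
        proof -
          have f1: "e \<le> e * z" using z1 by simp
          have f3: "Suc k \<le> z * Suc k" using mult_le_mono1[OF z1, of "Suc k"] by simp
          show ?thesis by (rule add_mono[OF add_mono[OF f1 order_refl] f3])
        qed
        also have "\<dots> = (e + 2 * k + 2) * z" by (simp add: algebra_simps)
        finally show "e + (z + 1) * Suc k \<le> (e + 2 * k + 2) * z" .
      qed simp
      also have "\<dots> \<le> 2 ^ tn j (B' * m)"
      proof (rule power_increasing)
        have "(e + 2 * k + 2) * z \<le> tn j ((e + 2 * k + 2) * (B * m))"
          unfolding z_def by (rule tn_scale) (use Bm1 in auto)
        also have "\<dots> \<le> tn j (B' * m)" unfolding B'_def by (rule tn_mono) (simp add: algebra_simps)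
        finally show "(e + 2 * k + 2) * z \<le> tn j (B' * m)" .
      qed simp
      finally show ?thesis using Suc by simp
    qed
    have "RB c (Suc (Suc k)) m \<le> 2 ^ tn k (B' * m)"
      using s1 s2 by (meson order_trans power_increasing one_le_numeral)
    then show "RB c (Suc (Suc k)) m \<le> tn (Suc k) (B' * m)" by simp
  qed
qed


lemma exp_bij:
  assumes e: "exp_separated A F" and img: "k ` A = B" and inj: "inj_on k A"
    and G: "\<forall>P\<in>A. G (k P) = F P"
  shows "exp_separated B G"
  unfolding exp_separated_def
proof (intro conjI ballI impI)
  have e1: "(\<forall>b\<in>A. 0 \<le> F b) \<or> (\<forall>b\<in>A. F b \<le> 0)" using e unfolding exp_separated_def by blast
  show "(\<forall>b\<in>B. 0 \<le> G b) \<or> (\<forall>b\<in>B. G b \<le> 0)"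
    using e1 img G by auto
  fix b b' assume b: "b \<in> B" "b' \<in> B" "b \<noteq> b'"
  obtain P P' where P: "P \<in> A" "b = k P" "P' \<in> A" "b' = k P'" using b img by auto
  have "P \<noteq> P'" using P b by auto
  then have "2 * \<bar>F P'\<bar> \<le> \<bar>F P\<bar> \<or> 2 * \<bar>F P\<bar> \<le> \<bar>F P'\<bar>"
    using e P unfolding exp_separated_def by blast
  then show "2 * \<bar>G b'\<bar> \<le> \<bar>G b\<bar> \<or> 2 * \<bar>G b\<bar> \<le> \<bar>G b'\<bar>" using P G by simp
qed

lemma enum_props:
  assumes fH: "finite H" and cH: "card H = m" and hdef: "h = (!) (sorted_list_of_set H)"
  shows "strict_mono_on {..<m} h" "h ` {..<m} = H"
proof -
  define L where "L = sorted_list_of_set H"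
  have lenL: "length L = m" unfolding L_def using cH by simp
  have sL: "sorted_wrt (<) L" unfolding L_def by simp
  show "strict_mono_on {..<m} h"
    by (rule strict_mono_onI) (use sL lenL in \<open>auto simp: hdef L_def[symmetric] sorted_wrt_nth_less\<close>)
  have "h ` {..<m} = set L" unfolding hdef L_def[symmetric] using lenL by (auto simp: set_conv_nth)
  then show "h ` {..<m} = H" unfolding L_def using fH by simp
qed

theorem lemma4p1:
  shows "\<exists>C::real. C > 0 \<and>
    (\<forall>(n::nat) (N::nat) (\<phi>::nat \<times> nat \<Rightarrow> real).
       n \<ge> 1 \<longrightarrow> real N \<ge> tw 8 (C * real n ^ 3) \<longrightarrow>
       (\<exists>S \<sigma>. S \<subseteq> {1..N} \<and> card S = n \<and>
          equiv_on S \<sigma> \<phi> \<and> exp_separated (pairs2 S) \<sigma>))"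
proof -
  define c where "c = card (Pow Dom)"
  have c1: "1 \<le> c" unfolding c_def using finite_Dom by (simp add: card_Pow)
  obtain B where B: "1 \<le> B" "\<forall>m\<ge>1. RB c (Suc 7) m \<le> tn 7 (B * m)"
    using RB_bound[OF c1, of 7] by blast
  show ?thesis
  proof (rule exI[of _ "30 * real B"], intro conjI allI impI)
    show "0 < 30 * real B" using B by simp
    fix n N :: nat and \<phi> :: "nat \<times> nat \<Rightarrow> real"
    assume n1: "1 \<le> n" and NN: "tw 8 (30 * real B * real n ^ 3) \<le> real N"
    define m where "m = 10 * n + 20"
    have m1: "1 \<le> m" and m8: "8 \<le> m" and mM: "10 * n + 12 \<le> m - 8" unfolding m_def by auto
    have Bm: "real (B * m) \<le> 30 * real B * real n ^ 3"
    proof -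
      have "real n \<le> real n ^ 3"
      proof -
        have "real n ^ 1 \<le> real n ^ 3" using n1 by (intro power_increasing) auto
        then show ?thesis by simp
      qed
      moreover have "1 \<le> real n" using n1 by simp
      moreover have "real m = 10 * real n + 20" unfolding m_def by simp
      ultimately have "real m \<le> 30 * real n ^ 3" by linarith
      then have "real B * real m \<le> real B * (30 * real n ^ 3)" by (rule mult_left_mono) simp
      then show ?thesis by (simp add: algebra_simps)
    qed
    have e8: "(8::nat) = Suc 7" by simp
    have tw8: "tw 8 (real (B * m)) = real (tn 7 (B * m))"
      unfolding e8 by (rule tw_tn)
    have "real (tn 7 (B * m)) \<le> real N" using tw_mono[OF Bm, of 8] tw8 NN by simp
    then have "tn 7 (B * m) \<le> N" by simp
    moreover have "RB c 8 m \<le> tn 7 (B * m)" unfolding e8 using B m1 by blast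
    ultimately have RBN: "RB c 8 m \<le> card {1..N}" by (simp del: RB.simps tn.simps)
    obtain H where H: "H \<subseteq> {1..N}" "card H = m"
        "\<forall>Y\<in>nsets H 8. \<forall>Y'\<in>nsets H 8. chi \<phi> Y = chi \<phi> Y'"
      using ramsey_expl[of "Pow Dom" c 8 "chi \<phi>" "{1..N}" m] finite_Dom c_def chi_in RBN by auto
    have fH: "finite H" using H(1) finite_subset by blast
    define h where "h = (!) (sorted_list_of_set H)"
    have smh: "strict_mono_on {..<m} h" and hH: "h ` {..<m} = H"
      using enum_props[OF fH H(2) h_def] by auto
    have injh: "inj_on h {..<m}" using smh by (rule strict_mono_on_imp_inj_on)
    have tp: "TP (\<lambda>(i,j). \<phi> (h i, h j)) (m - 8)" by (rule HOM_TP[OF fH H(2) m8 H(3) h_def])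
    obtain I \<rho>1 \<rho>2 where I: "I \<subseteq> {..<m-8}" "card I = n"
      and E: "exp_separated (pairs2 I) (\<lambda>(i,j). (\<lambda>(i,j). \<phi> (h i, h j)) (i,j) - \<rho>1 i - \<rho>2 j)"
      using main_idx[OF tp mM] by blast
    have Im: "I \<subseteq> {..<m}" using I(1) by auto
    define hinv where "hinv = the_inv_into {..<m} h"
    have hinv: "\<And>i. i \<in> I \<Longrightarrow> hinv (h i) = i"
      unfolding hinv_def using injh Im by (auto intro: the_inv_into_f_f)
    define S where "S = h ` I"
    define \<sigma> where "\<sigma> = (\<lambda>(x,y). \<phi> (x,y) - \<rho>1 (hinv x) - \<rho>2 (hinv y))"
    have injI: "inj_on h I" using injh Im by (rule inj_on_subset)
    define k where "k = (\<lambda>(i::nat,j::nat). (h i, h j))"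
    have kimg: "k ` pairs2 I = pairs2 S"
    proof
      show "k ` pairs2 I \<subseteq> pairs2 S"
      proof
        fix x assume "x \<in> k ` pairs2 I"
        then obtain i j where ij: "x = (h i, h j)" "i \<in> I" "j \<in> I" "i < j"
          unfolding k_def pairs2_def by auto
        have "i \<in> {..<m}" "j \<in> {..<m}" using ij Im by auto
        then have "h i < h j" using strict_mono_onD[OF smh _ _ ij(4)] by blast
        then show "x \<in> pairs2 S" using ij unfolding pairs2_def S_def by auto
      qed
    next
      show "pairs2 S \<subseteq> k ` pairs2 I"
      proof
        fix x assume "x \<in> pairs2 S"
        then obtain i j where ij: "x = (h i, h j)" "i \<in> I" "j \<in> I" "h i < h j"
          unfolding pairs2_def S_def by auto
        have "i < j"
        proof (rule ccontr)
          assume "\<not> i < j"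
          then have "j < i \<or> j = i" by auto
          then show False
          proof
            assume ji: "j < i"
            have "i \<in> {..<m}" "j \<in> {..<m}" using ij Im by auto
            then have "h j < h i" using strict_mono_onD[OF smh _ _ ji] by blast
            then show False using ij by simp
          qed (use ij in simp)
        qed
        then show "x \<in> k ` pairs2 I" using ij unfolding k_def pairs2_def by force
      qed
    qed
    have kinj: "inj_on k (pairs2 I)"
    proof (rule inj_onI)
      fix x y assume "x \<in> pairs2 I" "y \<in> pairs2 I" "k x = k y"
      then show "x = y" using injI unfolding k_def pairs2_def inj_on_def by auto
    qed
    have kG: "\<forall>P\<in>pairs2 I. \<sigma> (k P) = (\<lambda>(i,j). (\<lambda>(i,j). \<phi> (h i, h j)) (i,j) - \<rho>1 i - \<rho>2 j) P"
      unfolding k_def \<sigma>_def pairs2_def using hinv by auto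
    show "\<exists>S \<sigma>. S \<subseteq> {1..N} \<and> card S = n \<and> equiv_on S \<sigma> \<phi> \<and> exp_separated (pairs2 S) \<sigma>"
    proof (intro exI conjI)
      show "S \<subseteq> {1..N}" unfolding S_def using Im hH H(1) by auto
      show "card S = n" unfolding S_def using card_image[OF injI] I(2) by simp
      show "equiv_on S \<sigma> \<phi>" unfolding equiv_on_def
        by (rule exI[of _ "\<lambda>x. \<rho>1 (hinv x)"], rule exI[of _ "\<lambda>x. \<rho>2 (hinv x)"]) (auto simp: \<sigma>_def)
      show "exp_separated (pairs2 S) \<sigma>" by (rule exp_bij[OF E kimg kinj kG])
    qed
  qed
qed


end
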